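(* (1) $(e-r-1)(r-1)\le rk-e+1\le b-\sum_{i\in A}(r-r_i)\le k(r-1)$. (2) $b=(k-1)(r-1)+\sum_{i\in A}(r-r_i)$ if and only if $\sum_{i\in B}r_i=e-1$ and $k=e-r$. (3) $b=k(r-1)+\sum_{i\in A}(r-r_i)$ if and only if $r_i=1$ for every $i\in B$. (4) The following are equivalent: (a) $b=(e-r-1)(r-1)$; (b) $b=(k-1)(r-1)$; (c) $e-r=k$, $\sum_{i\in B}r_i=e-1$ and $r_i=r$ for every $i\in A$. If these hold, then $s_{i_0-1}=c-e$. (5) $b\ge(r-1)s$, where $s=|\{i\in\{1,\dots,n\}:r_i=1\}|$.
   Context: Let $(R,\mathfrak m)$ be a one-dimensional local Noetherian domain with quotient field $K$, not regular, analytically irreducible (the integral closure $\overline R$ of $R$ in $K$ is a DVR and a finite $R$-module) and residually rational. Let $v$ be the valuation of $\overline R$ normalized so a uniformizer $t$ has value 1, $v(R)=\{v(a):a\in R\setminus\{0\}\}$, $\mathfrak C=(R:_K\overline R)=t^c\overline R$ with $c$ the least element of $v(R)$ with $c+\mathbb N\subseteq v(R)$, $\delta=\ell_R(\overline R/R)$, $r=\ell_R((R:_K\mathfrak m)/R)$, $b=(c-\delta)r-\delta$, $e$ the least positive element of $v(R)$, $n=c-\delta$. Write $v(R)=\{s_0=0<s_1<\cdots\}$ ($s_n=c$), $R_i=\{a\in R:v(a)\ge s_i\}$, $r_i=\ell_R((R:_KR_i)/(R:_KR_{i-1}))$. Let $i_0\in[1,n]$ with $s_{i_0-1}=\min\{y\in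 v(R):y\ge c-e\}$, $B=\{i_0,\dots,n\}$, $A=\{1,\dots,n\}\setminus B$. Let $x\in\mathfrak m$ with $v(x)=e$ and $k=\ell_R(R/(\mathfrak C+xR))$. *)

theory Defs
  imports Main "HOL-Library.Infinite_Set"
begin

text \<open>The ambient quotient field K is the type 'a (class field); the ring R is a subset of it.
All modules occurring are R-submodules of K, so lengths of quotients M/N (N \<subseteq> M)
are computed as maximal lengths of strict chains of R-submodules of K from N to M.\<close>

definition Rsubmod :: "'a::field set \<Rightarrow> 'a set \<Rightarrow> bool" where
  "Rsubmod R M \<longleftrightarrow> 0 \<in> M \<and> (\<forall>x\<in>M. \<forall>y\<in>M. x + y \<in> M) \<and> (\<forall>a\<in>R. \<forall>x\<in>M. a * x \<in> M)"

definition len :: "'a::field set \<Rightarrow> 'a set \<Rightarrow> 'a set \<Rightarrow> nat" where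
  "len R N M = Sup {n. \<exists>L::nat \<Rightarrow> 'a set. L 0 = N \<and> L n = M \<and>
        (\<forall>i\<le>n. Rsubmod R (L i)) \<and> (\<forall>i<n. L i \<subset> L (Suc i))}"

definition subring :: "'a::field set \<Rightarrow> bool" where
  "subring R \<longleftrightarrow> 0 \<in> R \<and> 1 \<in> R \<and> (\<forall>x\<in>R. \<forall>y\<in>R. x + y \<in> R \<and> x * y \<in> R \<and> - x \<in> R)"

definition quot_field :: "'a::field set \<Rightarrow> bool" where
  "quot_field R \<longleftrightarrow> (\<forall>z. \<exists>a\<in>R. \<exists>b\<in>R. b \<noteq> 0 \<and> z = a / b)"

definition ideal_of :: "'a::field set \<Rightarrow> 'a set \<Rightarrow> bool" where
  "ideal_of R I \<longleftrightarrow> I \<subseteq> R \<and> Rsubmod R I"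

definition Rspan :: "'a::field set \<Rightarrow> 'a set \<Rightarrow> 'a set" where
  "Rspan R F = {\<Sum>f\<in>F. c f * f | c. \<forall>f\<in>F. c f \<in> R}"

definition noetherian :: "'a::field set \<Rightarrow> bool" where
  "noetherian R \<longleftrightarrow> (\<forall>I. ideal_of R I \<longrightarrow> (\<exists>F. finite F \<and> F \<subseteq> I \<and> I = Rspan R F))"

definition max_ideal :: "'a::field set \<Rightarrow> 'a set" where
  "max_ideal R = {x\<in>R. x = 0 \<or> inverse x \<notin> R}"

definition local_ring :: "'a::field set \<Rightarrow> bool" where
  "local_ring R \<longleftrightarrow> ideal_of R (max_ideal R)"

definition prime_ideal :: "'a::field set \<Rightarrow> 'a set \<Rightarrow> bool" where
  "prime_ideal R P \<longleftrightarrow> ideal_of R P \<and> P \<noteq> R \<and> (\<forall>a\<in>R. \<forall>b\<in>R. a * b \<in> P \<longrightarrow> a \<in> P \<or> b \<in> P)"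

definition dim_one :: "'a::field set \<Rightarrow> bool" where
  "dim_one R \<longleftrightarrow> max_ideal R \<noteq> {0} \<and> (\<forall>P. prime_ideal R P \<and> P \<noteq> {0} \<longrightarrow> P = max_ideal R)"

text \<open>A one-dimensional local ring is regular iff its maximal ideal is principal.\<close>
definition regular_dim1 :: "'a::field set \<Rightarrow> bool" where
  "regular_dim1 R \<longleftrightarrow> (\<exists>t\<in>R. max_ideal R = Rspan R {t})"

definition integral_closure :: "'a::field set \<Rightarrow> 'a set" where
  "integral_closure R = {z. \<exists>n c. (\<forall>i<n. c i \<in> R) \<and> z ^ n + (\<Sum>i<n. c i * z ^ i) = 0}"

text \<open>A normalized discrete valuation of K (value of 0 irrelevant, v(0)=\<infinity> by convention).\<close>
definition normalized_valuation :: "('a::field \<Rightarrow> int) \<Rightarrow> bool" where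
  "normalized_valuation v \<longleftrightarrow>
     (\<forall>a b. a \<noteq> 0 \<longrightarrow> b \<noteq> 0 \<longrightarrow> v (a * b) = v a + v b) \<and>
     (\<forall>a b. a \<noteq> 0 \<longrightarrow> b \<noteq> 0 \<longrightarrow> a + b \<noteq> 0 \<longrightarrow> v (a + b) \<ge> min (v a) (v b)) \<and>
     (\<exists>t. t \<noteq> 0 \<and> v t = 1)"

definition valuation_ring :: "('a::field \<Rightarrow> int) \<Rightarrow> 'a set" where
  "valuation_ring v = {z. z = 0 \<or> v z \<ge> 0}"

definition valuation_max_ideal :: "('a::field \<Rightarrow> int) \<Rightarrow> 'a set" where
  "valuation_max_ideal v = {z. z = 0 \<or> v z > 0}"

text \<open>Standing hypotheses: R is a one-dimensional local Noetherian domain with quotient field K,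
not regular, whose integral closure is the DVR with normalized valuation v and is a finite
R-module, and residually rational (R/m \<rightarrow> Rbar/mbar surjective).\<close>
definition setting :: "'a::field set \<Rightarrow> ('a \<Rightarrow> int) \<Rightarrow> bool" where
  "setting R v \<longleftrightarrow> subring R \<and> quot_field R \<and> noetherian R \<and> local_ring R \<and> dim_one R \<and>
     \<not> regular_dim1 R \<and> normalized_valuation v \<and> integral_closure R = valuation_ring v \<and>
     (\<exists>F. finite F \<and> integral_closure R = Rspan R F) \<and>
     (\<forall>u\<in>integral_closure R. \<exists>a\<in>R. u - a \<in> valuation_max_ideal v)"

definition vR :: "'a::field set \<Rightarrow> ('a \<Rightarrow> int) \<Rightarrow> nat set" where
  "vR R v = (\<lambda>a. nat (v a)) ` (R - {0})"

definition cond :: "'a::field set \<Rightarrow> ('a \<Rightarrow> int) \<Rightarrow> nat" where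
  "cond R v = (LEAST c. c \<in> vR R v \<and> (\<forall>j. c + j \<in> vR R v))"

definition colon :: "'a::field set \<Rightarrow> 'a set \<Rightarrow> 'a set" where
  "colon M N = {z. \<forall>y\<in>N. z * y \<in> M}"

definition conductor :: "'a::field set \<Rightarrow> 'a set" where
  "conductor R = colon R (integral_closure R)"

definition delta :: "'a::field set \<Rightarrow> nat" where
  "delta R = len R R (integral_closure R)"

definition ctype :: "'a::field set \<Rightarrow> nat" where
  "ctype R = len R R (colon R (max_ideal R))"

definition bb :: "'a::field set \<Rightarrow> ('a \<Rightarrow> int) \<Rightarrow> int" where
  "bb R v = (int (cond R v) - int (delta R)) * int (ctype R) - int (delta R)"

definition mult_e :: "'a::field set \<Rightarrow> ('a \<Rightarrow> int) \<Rightarrow> nat" where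
  "mult_e R v = (LEAST y. y \<in> vR R v \<and> y > 0)"

definition nn :: "'a::field set \<Rightarrow> ('a \<Rightarrow> int) \<Rightarrow> nat" where
  "nn R v = cond R v - delta R"

text \<open>s i = the i-th element (from 0) of v(R) in increasing order.\<close>
definition sv :: "'a::field set \<Rightarrow> ('a \<Rightarrow> int) \<Rightarrow> nat \<Rightarrow> nat" where
  "sv R v i = enumerate (vR R v) i"

definition Rfilt :: "'a::field set \<Rightarrow> ('a \<Rightarrow> int) \<Rightarrow> nat \<Rightarrow> 'a set" where
  "Rfilt R v i = {a\<in>R. a = 0 \<or> v a \<ge> int (sv R v i)}"

definition ri :: "'a::field set \<Rightarrow> ('a \<Rightarrow> int) \<Rightarrow> nat \<Rightarrow> nat" where
  "ri R v i = len R (colon R (Rfilt R v (i - 1))) (colon R (Rfilt R v i))"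

definition kk :: "'a::field set \<Rightarrow> 'a \<Rightarrow> nat" where
  "kk R x = len R {a + x * r | a r. a \<in> conductor R \<and> r \<in> R} R"

end

theory Submission
  imports Defs
begin



locale stp =
  fixes R :: "'a::field set" and v :: "'a \<Rightarrow> int"
  assumes S: "setting R v"
begin

definition Ge :: "int \<Rightarrow> 'a set" where "Ge m = {z. z = 0 \<or> v z \<ge> m}"
definition VS :: "'a set \<Rightarrow> int set" where "VS M = {v z | z. z \<in> M \<and> z \<noteq> 0}"

lemma sub: "subring R" using S unfolding setting_def by auto
lemma R0: "0 \<in> R" and R1: "1 \<in> R" using sub unfolding subring_def by auto
lemma Radd: "a \<in> R \<Longrightarrow> b \<in> R \<Longrightarrow> a + b \<in> R"
  and Rmult: "a \<in> R \<Longrightarrow> b \<in> R \<Longrightarrow> a * b \<in> R"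
  and Rneg: "a \<in> R \<Longrightarrow> - a \<in> R"
  using sub unfolding subring_def by auto
lemma Rdiff: "a \<in> R \<Longrightarrow> b \<in> R \<Longrightarrow> a - b \<in> R"
  using Radd[of a "-b"] Rneg[of b] by simp

lemma nv: "normalized_valuation v" using S unfolding setting_def by auto
lemma v_mult: "a \<noteq> 0 \<Longrightarrow> b \<noteq> 0 \<Longrightarrow> v (a * b) = v a + v b"
  using nv unfolding normalized_valuation_def by auto
lemma v_add: "a \<noteq> 0 \<Longrightarrow> b \<noteq> 0 \<Longrightarrow> a + b \<noteq> 0 \<Longrightarrow> v (a + b) \<ge> min (v a) (v b)"
  using nv unfolding normalized_valuation_def by auto
lemma t_ex: "\<exists>t. t \<noteq> 0 \<and> v t = 1"
  using nv unfolding normalized_valuation_def by auto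
lemma v_one: "v 1 = 0" using v_mult[of 1 1] by simp
lemma v_inv: "a \<noteq> 0 \<Longrightarrow> v (inverse a) = - v a"
  using v_mult[of a "inverse a"] v_one by simp
lemma v_div: "a \<noteq> 0 \<Longrightarrow> b \<noteq> 0 \<Longrightarrow> v (a / b) = v a - v b"
  using v_mult[of a "inverse b"] v_inv[of b] by (simp add: divide_inverse)
lemma v_m1: "v (-1) = 0"
  using v_mult[of "-1" "-1"] v_one by simp
lemma v_neg: "v (- a) = v a"
proof (cases "a = 0")
  case False thus ?thesis using v_mult[of "-1" a] v_m1 by simp
qed simp
lemma v_diff: "a \<noteq> 0 \<Longrightarrow> b \<noteq> 0 \<Longrightarrow> a - b \<noteq> 0 \<Longrightarrow> v (a - b) \<ge> min (v a) (v b)"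
  using v_add[of a "-b"] v_neg[of b] by simp
lemma v_strict: assumes "a \<noteq> 0" "b \<noteq> 0" "v a < v b"
  shows "a + b \<noteq> 0" "v (a + b) = v a"
proof -
  show ab: "a + b \<noteq> 0"
  proof
    assume "a + b = 0" hence "b = - a" by (simp add: eq_neg_iff_add_eq_0 add.commute)
    hence "v b = v a" using v_neg[of a] by simp
    thus False using assms(3) by simp
  qed
  have 1: "v (a + b) \<ge> min (v a) (v b)" using v_add[OF assms(1,2) ab] .
  have nb: "- b \<noteq> 0" using assms(2) by simp
  have 2: "v ((a + b) + (- b)) \<ge> min (v (a+b)) (v (-b))"
    using v_add[OF ab nb] assms(1) by simp
  have 3: "v (- b) = v b" by (rule v_neg)
  have "(a + b) + (- b) = a" by simp
  hence "v a \<ge> min (v (a+b)) (v b)" using 2 3 by simp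
  thus "v (a + b) = v a" using 1 assms(3) by linarith
qed

lemma Ge_mem: "z \<in> Ge m \<longleftrightarrow> z = 0 \<or> v z \<ge> m" by (simp add: Ge_def)
lemma Ge0[simp]: "0 \<in> Ge m" by (simp add: Ge_def)
lemma Ge_add: assumes "a \<in> Ge m" "b \<in> Ge m" shows "a + b \<in> Ge m"
proof (cases "a = 0 \<or> b = 0 \<or> a + b = 0")
  case True thus ?thesis using assms by auto
next
  case False
  hence "v (a + b) \<ge> min (v a) (v b)" using v_add by blast
  moreover have "v a \<ge> m" "v b \<ge> m" using assms False unfolding Ge_def by auto
  ultimately have "v (a + b) \<ge> m" by linarith
  thus ?thesis unfolding Ge_def by simp
qed
lemma Ge_neg: "a \<in> Ge m \<Longrightarrow> - a \<in> Ge m"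
  unfolding Ge_def using v_neg[of a] by auto
lemma Ge_mult: "a \<in> Ge m \<Longrightarrow> b \<in> Ge n \<Longrightarrow> a * b \<in> Ge (m + n)"
  unfolding Ge_def using v_mult[of a b] by (cases "a = 0"; cases "b = 0") auto
lemma Ge_mono: "m \<le> n \<Longrightarrow> Ge n \<subseteq> Ge m"
  unfolding Ge_def by auto

lemma SS: "subring R \<and> quot_field R \<and> noetherian R \<and> local_ring R \<and> dim_one R \<and>
     \<not> regular_dim1 R \<and> normalized_valuation v \<and> integral_closure R = valuation_ring v \<and>
     (\<exists>F. finite F \<and> integral_closure R = Rspan R F) \<and>
     (\<forall>u\<in>integral_closure R. \<exists>a\<in>R. u - a \<in> valuation_max_ideal v)"
  using S unfolding setting_def .
lemma ic_eq: "integral_closure R = Ge 0"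
proof -
  have "integral_closure R = valuation_ring v" using SS by blast
  thus ?thesis unfolding valuation_ring_def Ge_def by simp
qed

lemma R_ic: assumes "z \<in> R" shows "z \<in> integral_closure R"
proof -
  let ?c = "\<lambda>i::nat. - z"
  have "(\<forall>i<1. ?c i \<in> R) \<and> z ^ 1 + (\<Sum>i<1. ?c i * z ^ i) = 0"
    using Rneg[OF assms] by simp
  hence "\<exists>n c. (\<forall>i<n. c i \<in> R) \<and> z ^ n + (\<Sum>i<n. c i * z ^ i) = 0" by (intro exI)
  thus ?thesis unfolding integral_closure_def by (rule CollectI)
qed
lemma R_Ge0: "R \<subseteq> Ge 0" using R_ic ic_eq by auto

lemma resid: assumes "u \<in> Ge 0" shows "\<exists>a\<in>R. u - a = 0 \<or> v (u - a) > 0"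
proof -
  have "\<forall>u\<in>integral_closure R. \<exists>a\<in>R. u - a \<in> valuation_max_ideal v" using SS by blast
  moreover have "u \<in> integral_closure R" using assms ic_eq by simp
  ultimately have "\<exists>a\<in>R. u - a \<in> valuation_max_ideal v" by (rule bspec)
  thus ?thesis unfolding valuation_max_ideal_def by simp
qed

lemma Ge_sub: "Rsubmod R (Ge m)"
  unfolding Rsubmod_def
proof (intro conjI ballI)
  fix a x assume "a \<in> R" "x \<in> Ge m"
  thus "a * x \<in> Ge m" using Ge_mult[of a 0 x m] R_Ge0 by auto
qed (auto intro: Ge_add)

lemma sm0: "Rsubmod R M \<Longrightarrow> 0 \<in> M" unfolding Rsubmod_def by auto
lemma smadd: "Rsubmod R M \<Longrightarrow> a \<in> M \<Longrightarrow> b \<in> M \<Longrightarrow> a + b \<in> M" unfolding Rsubmod_def by auto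
lemma smmult: "Rsubmod R M \<Longrightarrow> a \<in> R \<Longrightarrow> b \<in> M \<Longrightarrow> a * b \<in> M" unfolding Rsubmod_def by auto
lemma smneg: "Rsubmod R M \<Longrightarrow> b \<in> M \<Longrightarrow> - b \<in> M"
  using smmult[of M "-1" b] Rneg[OF R1] by simp
lemma smdiff: "Rsubmod R M \<Longrightarrow> a \<in> M \<Longrightarrow> b \<in> M \<Longrightarrow> a - b \<in> M"
  using smadd[of M a "-b"] smneg by simp

lemma approx:
  assumes L: "Rsubmod R L" and L': "Rsubmod R L'" and sub: "L \<subseteq> L'" and Ga: "Ge a \<subseteq> L"
    and vals: "\<And>z. z \<in> L' \<Longrightarrow> z \<noteq> 0 \<Longrightarrow> \<exists>y\<in>L. y \<noteq> 0 \<and> v y = v z"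
  shows "L' \<subseteq> L"
proof -
  have main: "\<forall>z. z \<in> L' \<longrightarrow> z \<noteq> 0 \<longrightarrow> nat (a - v z) \<le> d \<longrightarrow> z \<in> L" for d
  proof (induction d)
    case 0
    then show ?case using Ga unfolding Ge_def by auto
  next
    case (Suc d)
    show ?case
    proof (intro allI impI)
      fix z assume z: "z \<in> L'" "z \<noteq> 0" "nat (a - v z) \<le> Suc d"
      show "z \<in> L"
      proof (cases "v z \<ge> a")
        case True thus ?thesis using Ga unfolding Ge_def by auto
      next
        case False
        obtain y where y: "y \<in> L" "y \<noteq> 0" "v y = v z" using vals z by blast
        have "v (z / y) = 0" using v_div[of z y] y z by simp
        hence "z / y \<in> Ge 0" by (simp add: Ge_def)
        then obtain l where l: "l \<in> R" "z / y - l = 0 \<or> v (z / y - l) > 0" using resid by blast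
        have ly: "l * y \<in> L" using smmult[OF L l(1) y(1)] .
        have zz: "z - l * y = y * (z / y - l)" using y(2) by (simp add: field_simps)
        have "z - l * y \<in> L"
        proof (cases "z - l * y = 0")
          case True thus ?thesis using sm0[OF L] by simp
        next
          case nz: False
          hence ne: "z / y - l \<noteq> 0" using zz by auto
          hence vpos: "v (z / y - l) > 0" using l by auto
          have "v (z - l * y) = v y + v (z / y - l)" using zz v_mult[OF y(2) ne] by simp
          hence "v (z - l * y) > v z" using vpos y by simp
          moreover have "z - l * y \<in> L'" using smdiff[OF L' z(1)] ly sub by auto
          moreover have "nat (a - v (z - l * y)) \<le> d" using calculation z(3) False by linarith
          ultimately show ?thesis using Suc.IH nz by blast
        qed
        hence "(z - l * y) + l * y \<in> L" using smadd[OF L _ ly] by blast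
        thus ?thesis by simp
      qed
    qed
  qed
  show ?thesis
  proof
    fix z assume "z \<in> L'"
    show "z \<in> L"
    proof (cases "z = 0")
      case True thus ?thesis using sm0[OF L] by simp
    next
      case False
      show ?thesis using main[of "nat (a - v z)"] False \<open>z \<in> L'\<close> by blast
    qed
  qed
qed

end


context stp begin

definition tt where "tt = (SOME t. t \<noteq> 0 \<and> v t = 1)"
lemma tt: "tt \<noteq> 0" "v tt = 1" using someI_ex[OF t_ex] unfolding tt_def by auto
lemma ttpow: "tt ^ n \<noteq> 0 \<and> v (tt ^ n) = int n"
proof (induction n)
  case 0 thus ?case using v_one by simp
next
  case (Suc n) thus ?case using v_mult[of tt "tt ^ n"] tt by simp
qed
definition tp :: "int \<Rightarrow> 'a" where
  "tp j = (if j \<ge> 0 then tt ^ nat j else inverse (tt ^ nat (- j)))"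
lemma tp: "tp j \<noteq> 0" "v (tp j) = j"
  unfolding tp_def using ttpow[of "nat j"] ttpow[of "nat (-j)"] v_inv[of "tt ^ nat (-j)"] by auto

lemma VS_mem: "u \<in> VS M \<longleftrightarrow> (\<exists>z. z \<in> M \<and> z \<noteq> 0 \<and> v z = u)" unfolding VS_def by auto
lemma VS_mono: "M \<subseteq> M' \<Longrightarrow> VS M \<subseteq> VS M'" unfolding subset_iff VS_mem by blast
lemma VS_Ge: "u \<in> VS (Ge a) \<longleftrightarrow> u \<ge> a"
proof
  assume "u \<in> VS (Ge a)" thus "u \<ge> a" unfolding VS_mem Ge_def by auto
next
  assume "u \<ge> a"
  hence "tp u \<in> Ge a" "tp u \<noteq> 0" "v (tp u) = u" using tp unfolding Ge_def by auto
  thus "u \<in> VS (Ge a)" unfolding VS_mem by blast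
qed
lemma VS_low: "M \<subseteq> Ge b \<Longrightarrow> u \<in> VS M \<Longrightarrow> u \<ge> b"
  using VS_mono[of M "Ge b"] VS_Ge by blast

lemma VS_fin: assumes "Ge a \<subseteq> N" "M \<subseteq> Ge b"
  shows "VS M - VS N \<subseteq> {b..<a}" "finite (VS M - VS N)"
proof -
  show "VS M - VS N \<subseteq> {b..<a}"
  proof
    fix u assume u: "u \<in> VS M - VS N"
    hence "u \<ge> b" using VS_low[OF assms(2)] by blast
    moreover have "\<not> u \<ge> a"
    proof
      assume "u \<ge> a" hence "u \<in> VS (Ge a)" using VS_Ge by simp
      thus False using u VS_mono[OF assms(1)] by blast
    qed
    ultimately show "u \<in> {b..<a}" by simp
  qed
  thus "finite (VS M - VS N)" by (rule finite_subset) simp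
qed

lemma eqval: assumes "Rsubmod R L" "Rsubmod R L'" "L \<subseteq> L'" "Ge a \<subseteq> L" "VS L' \<subseteq> VS L"
  shows "L' = L"
proof -
  have "L' \<subseteq> L"
  proof (rule approx[OF assms(1-4)])
    fix z assume "z \<in> L'" "z \<noteq> 0"
    hence "v z \<in> VS L'" unfolding VS_mem by blast
    hence "v z \<in> VS L" using assms(5) by blast
    thus "\<exists>y\<in>L. y \<noteq> 0 \<and> v y = v z" unfolding VS_mem by blast
  qed
  thus ?thesis using assms(3) by blast
qed

definition chain :: "(nat \<Rightarrow> 'a set) \<Rightarrow> 'a set \<Rightarrow> 'a set \<Rightarrow> nat \<Rightarrow> bool" where
  "chain L N M n \<longleftrightarrow> L 0 = N \<and> L n = M \<and> (\<forall>i\<le>n. Rsubmod R (L i)) \<and> (\<forall>i<n. L i \<subset> L (Suc i))"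

lemma len_chain: "len R N M = Sup {n. \<exists>L. chain L N M n}"
  unfolding len_def chain_def by simp

definition fr where "fr N M a b \<longleftrightarrow> Rsubmod R N \<and> Rsubmod R M \<and> N \<subseteq> M \<and> Ge a \<subseteq> N \<and> M \<subseteq> Ge b"

lemma chain_le: assumes F: "fr N M a b" and C: "chain L N M n"
  shows "n \<le> card (VS M - VS N)"
proof -
  have sN: "Rsubmod R N" and sM: "Rsubmod R M" and NM: "N \<subseteq> M" and GN: "Ge a \<subseteq> N" and MG: "M \<subseteq> Ge b"
    using F unfolding fr_def by auto
  have L0: "L 0 = N" and Ln: "L n = M" and Ls: "\<And>i. i \<le> n \<Longrightarrow> Rsubmod R (L i)"
    and Lst: "\<And>i. i < n \<Longrightarrow> L i \<subset> L (Suc i)" using C unfolding chain_def by auto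
  have mono: "L i \<subseteq> L (i + j)" if "i + j \<le> n" for i j using that
  proof (induction j)
    case 0 show ?case by simp
  next
    case (Suc j)
    have "L (i + j) \<subset> L (Suc (i + j))" using Lst[of "i + j"] Suc.prems by simp
    moreover have "L i \<subseteq> L (i + j)" using Suc by simp
    ultimately show ?case by simp
  qed
  have up: "N \<subseteq> L i" if "i \<le> n" for i using mono[of 0 i] that L0 by simp
  have down: "L i \<subseteq> M" if "i \<le> n" for i using mono[of i "n - i"] that Ln by simp
  have fin: "finite (VS M - VS N)" using VS_fin(2)[OF GN MG] .
  have "i \<le> card (VS (L i) - VS N)" if "i \<le> n" for i using that
  proof (induction i)
    case 0 thus ?case by simp
  next
    case (Suc i)
    have il: "i < n" using Suc.prems by simp
    have li: "L i \<subset> L (Suc i)" using Lst[OF il] .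
    have r1: "Rsubmod R (L i)" using Ls il by simp
    have r2: "Rsubmod R (L (Suc i))" using Ls Suc.prems by simp
    have ga: "Ge a \<subseteq> L i" using up[of i] il GN by simp
    have "VS (L (Suc i)) \<noteq> VS (L i)"
    proof
      assume eq: "VS (L (Suc i)) = VS (L i)"
      have "L (Suc i) = L i"
        using eqval[OF r1 r2 _ ga] li eq by simp
      thus False using li by simp
    qed
    moreover have "VS (L i) \<subseteq> VS (L (Suc i))" using VS_mono li by simp
    moreover have "VS N \<subseteq> VS (L i)" using VS_mono[OF up[of i]] il by simp
    ultimately have ps: "VS (L i) - VS N \<subset> VS (L (Suc i)) - VS N" by blast
    have "VS (L (Suc i)) - VS N \<subseteq> VS M - VS N" using VS_mono[OF down[OF Suc.prems]] by blast
    hence "finite (VS (L (Suc i)) - VS N)" using fin by (rule finite_subset)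
    hence "card (VS (L i) - VS N) < card (VS (L (Suc i)) - VS N)"
      using ps by (rule psubset_card_mono)
    thus ?case using Suc.IH il by simp
  qed
  from this[of n] show ?thesis using Ln by simp
qed

definition pls :: "'a set \<Rightarrow> 'a set \<Rightarrow> 'a set" where
  "pls A B = {z. \<exists>x y. x \<in> A \<and> y \<in> B \<and> z = x + y}"
lemma pls_mem: "z \<in> pls A B \<longleftrightarrow> (\<exists>x y. x \<in> A \<and> y \<in> B \<and> z = x + y)"
  unfolding pls_def by simp
lemma pls_I: "x \<in> A \<Longrightarrow> y \<in> B \<Longrightarrow> x + y \<in> pls A B"
  unfolding pls_mem by blast
lemma pls_E: assumes "z \<in> pls A B" obtains x y where "x \<in> A" "y \<in> B" "z = x + y"
  using assms unfolding pls_mem by blast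

lemma sm_inter: "Rsubmod R A \<Longrightarrow> Rsubmod R B \<Longrightarrow> Rsubmod R (A \<inter> B)"
  unfolding Rsubmod_def by blast

lemma sm_pls: assumes A: "Rsubmod R A" and B: "Rsubmod R B" shows "Rsubmod R (pls A B)"
  unfolding Rsubmod_def
proof (intro conjI ballI)
  show "0 \<in> pls A B" using pls_I[OF sm0[OF A] sm0[OF B]] by simp
next
  fix z w assume z: "z \<in> pls A B" and w: "w \<in> pls A B"
  obtain x y where xy: "x \<in> A" "y \<in> B" "z = x + y" using pls_E[OF z] by blast
  obtain x' y' where xy': "x' \<in> A" "y' \<in> B" "w = x' + y'" using pls_E[OF w] by blast
  have "z + w = (x + x') + (y + y')" using xy xy' by (simp add: algebra_simps)
  thus "z + w \<in> pls A B" using pls_I[OF smadd[OF A xy(1) xy'(1)] smadd[OF B xy(2) xy'(2)]] by simp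
next
  fix l z assume l: "l \<in> R" and z: "z \<in> pls A B"
  obtain x y where xy: "x \<in> A" "y \<in> B" "z = x + y" using pls_E[OF z] by blast
  have "l * z = l * x + l * y" using xy by (simp add: algebra_simps)
  thus "l * z \<in> pls A B" using pls_I[OF smmult[OF A l xy(1)] smmult[OF B l xy(2)]] by simp
qed

lemma pls_sub1: "Rsubmod R B \<Longrightarrow> A \<subseteq> pls A B"
  using pls_I[of _ A 0 B] sm0 by fastforce
lemma pls_sub2: "Rsubmod R A \<Longrightarrow> B \<subseteq> pls A B"
  using pls_I[of 0 A _ B] sm0 by fastforce
lemma pls_le: assumes "Rsubmod R M" "A \<subseteq> M" "B \<subseteq> M" shows "pls A B \<subseteq> M"
proof
  fix z assume "z \<in> pls A B"
  then obtain x y where "x \<in> A" "y \<in> B" "z = x + y" by (rule pls_E)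
  thus "z \<in> M" using smadd[OF assms(1)] assms(2,3) by blast
qed

lemma chain_ex: assumes F: "fr N M a b"
  shows "\<exists>L. chain L N M (card (VS M - VS N))"
  using F
proof (induction "card (VS M - VS N)" arbitrary: N)
  case 0
  have sN: "Rsubmod R N" and sM: "Rsubmod R M" and NM: "N \<subseteq> M" and GN: "Ge a \<subseteq> N" and MG: "M \<subseteq> Ge b"
    using 0 unfolding fr_def by auto
  have "finite (VS M - VS N)" using VS_fin(2)[OF GN MG] .
  hence "VS M - VS N = {}" using 0 by simp
  hence "VS M \<subseteq> VS N" by blast
  hence "M = N" using eqval[OF sN sM NM GN] by simp
  hence "chain (\<lambda>_. N) N M 0" unfolding chain_def using sN by simp
  thus ?case using 0 by metis
next
  case (Suc p N)
  have sN: "Rsubmod R N" and sM: "Rsubmod R M" and NM: "N \<subseteq> M" and GN: "Ge a \<subseteq> N" and MG: "M \<subseteq> Ge b"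
    using Suc.prems unfolding fr_def by auto
  have fin: "finite (VS M - VS N)" using VS_fin(2)[OF GN MG] .
  have ne: "VS M - VS N \<noteq> {}" using Suc.hyps(2) by (metis card.empty nat.distinct(1))
  define g where "g = Max (VS M - VS N)"
  have g1: "g \<in> VS M - VS N" using Max_in[OF fin ne] unfolding g_def .
  have g2: "\<And>u. u \<in> VS M - VS N \<Longrightarrow> u \<le> g" using Max_ge[OF fin] unfolding g_def .
  define Mg where "Mg = M \<inter> Ge g"
  have sMg: "Rsubmod R Mg" unfolding Mg_def using sm_inter[OF sM Ge_sub] .
  define N' where "N' = pls N Mg"
  have sN': "Rsubmod R N'" unfolding N'_def using sm_pls[OF sN sMg] .
  have NN': "N \<subseteq> N'" unfolding N'_def using pls_sub1[OF sMg] .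
  have N'M: "N' \<subseteq> M" unfolding N'_def using pls_le[OF sM NM] Mg_def by blast
  have MgN': "Mg \<subseteq> N'" unfolding N'_def using pls_sub2[OF sN] .
  have VSN': "VS N' \<subseteq> VS N \<union> {u. u \<ge> g}"
  proof
    fix u assume "u \<in> VS N'"
    then obtain z where z: "z \<in> N'" "z \<noteq> 0" "v z = u" unfolding VS_mem by blast
    then obtain x y where xy: "x \<in> N" "y \<in> Mg" "z = x + y" unfolding N'_def by (blast elim: pls_E)
    show "u \<in> VS N \<union> {u. u \<ge> g}"
    proof (cases "y = 0")
      case True
      hence "x \<in> N" "x \<noteq> 0" "v x = u" using xy z by auto
      hence "u \<in> VS N" unfolding VS_mem by blast
      thus ?thesis by simp
    next
      case yn: False
      hence vy: "v y \<ge> g" using xy unfolding Ge_def Mg_def by auto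
      show ?thesis
      proof (cases "x = 0")
        case True thus ?thesis using xy z vy by auto
      next
        case xn: False
        show ?thesis
        proof (cases "v x < v y")
          case True
          hence "v z = v x" using v_strict[OF xn yn True] xy by simp
          hence "u \<in> VS N" using xy(1) z xn unfolding VS_mem by metis
          thus ?thesis by simp
        next
          case False
          have "v (x + y) \<ge> min (v x) (v y)" using v_add[OF xn yn] xy z by simp
          hence "v z \<ge> g" using False vy xy by simp
          thus ?thesis using z by simp
        qed
      qed
    qed
  qed
  have gN': "g \<in> VS N'"
  proof -
    have "g \<in> VS M" using g1 by simp
    then obtain z where z: "z \<in> M" "z \<noteq> 0" "v z = g" unfolding VS_mem by blast
    hence "z \<in> Mg" unfolding Mg_def Ge_def by simp
    hence "z \<in> N'" using MgN' by blast
    thus ?thesis using z unfolding VS_mem by blast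
  qed
  have diff: "VS M - VS N' = (VS M - VS N) - {g}"
  proof
    show "VS M - VS N' \<subseteq> (VS M - VS N) - {g}" using VS_mono[OF NN'] gN' by blast
    show "(VS M - VS N) - {g} \<subseteq> VS M - VS N'"
    proof
      fix u assume u: "u \<in> (VS M - VS N) - {g}"
      hence "u < g" using g2[of u] by simp
      thus "u \<in> VS M - VS N'" using u VSN' by auto
    qed
  qed
  have cardN': "p = card (VS M - VS N')" using diff Suc.hyps(2) g1 fin by simp
  have frN': "fr N' M a b" unfolding fr_def using sN' sM N'M GN NN' MG by blast
  obtain L where L: "chain L N' M p" using Suc.hyps(1)[OF cardN' frN'] cardN' by metis
  define L' where "L' = (\<lambda>i. if i = 0 then N else L (i - 1))"
  have neq: "N \<noteq> N'" using gN' g1 by blast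
  have "chain L' N M (Suc p)" unfolding chain_def
  proof (intro conjI allI impI)
    show "L' 0 = N" unfolding L'_def by simp
    show "L' (Suc p) = M" unfolding L'_def using L unfolding chain_def by simp
  next
    fix i assume "i \<le> Suc p"
    thus "Rsubmod R (L' i)" unfolding L'_def using L sN unfolding chain_def by (cases i) auto
  next
    fix i assume "i < Suc p"
    thus "L' i \<subset> L' (Suc i)" unfolding L'_def using L NN' neq unfolding chain_def by (cases i) auto
  qed
  thus ?case using Suc.hyps(2) by metis
qed

lemma len_eq: assumes "fr N M a b" shows "len R N M = card (VS M - VS N)"
  unfolding len_chain
proof (rule cSup_eq_maximum)
  show "card (VS M - VS N) \<in> {n. \<exists>L. chain L N M n}" using chain_ex[OF assms] by blast
  show "\<And>x. x \<in> {n. \<exists>L. chain L N M n} \<Longrightarrow> x \<le> card (VS M - VS N)"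
    using chain_le[OF assms] by blast
qed

end


context stp begin

lemma sum_R: "finite F \<Longrightarrow> (\<And>f. f \<in> F \<Longrightarrow> g f \<in> R) \<Longrightarrow> sum g F \<in> R"
proof (induction F rule: finite_induct)
  case empty thus ?case using R0 by simp
next
  case (insert x F) thus ?case using Radd by simp
qed
lemma prod_R: "finite F \<Longrightarrow> (\<And>f. f \<in> F \<Longrightarrow> g f \<in> R) \<Longrightarrow> prod g F \<in> R"
proof (induction F rule: finite_induct)
  case empty thus ?case using R1 by simp
next
  case (insert x F) thus ?case using Rmult by simp
qed

lemma cond_ex: "\<exists>D. Ge D \<subseteq> R"
proof -
  have qf: "\<forall>z. \<exists>a\<in>R. \<exists>b\<in>R. b \<noteq> 0 \<and> z = a / b" using SS unfolding quot_field_def by blast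
  then obtain A B where AB: "\<And>z. A z \<in> R \<and> B z \<in> R \<and> B z \<noteq> 0 \<and> z = A z / B z" by metis
  obtain F where F: "finite F" "integral_closure R = Rspan R F" using SS by blast
  define d where "d = prod B F"
  have dR: "d \<in> R" unfolding d_def using prod_R[OF F(1)] AB by blast
  have dn: "d \<noteq> 0" unfolding d_def using AB F(1) by (simp add: prod_zero_iff)
  have df: "d * f \<in> R" if f: "f \<in> F" for f
  proof -
    have "d = B f * prod B (F - {f})" unfolding d_def using prod.remove[OF F(1) f] by simp
    moreover have "f = A f / B f" "B f \<noteq> 0" using AB[of f] by auto
    ultimately have "d * f = A f * prod B (F - {f})" by (simp add: field_simps)
    moreover have "prod B (F - {f}) \<in> R" using prod_R[of "F - {f}" B] F(1) AB by blast
    ultimately show ?thesis using Rmult AB by simp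
  qed
  have dw: "d * w \<in> R" if w: "w \<in> Ge 0" for w
  proof -
    have "w \<in> Rspan R F" using w ic_eq F(2) by simp
    then obtain c where c: "w = (\<Sum>f\<in>F. c f * f)" "\<forall>f\<in>F. c f \<in> R" unfolding Rspan_def by blast
    have "d * w = (\<Sum>f\<in>F. c f * (d * f))" unfolding c(1) sum_distrib_left by (simp add: algebra_simps)
    also have "\<dots> \<in> R" using sum_R[OF F(1)] c(2) df Rmult by simp
    finally show ?thesis .
  qed
  have "Ge (v d) \<subseteq> R"
  proof
    fix z assume z: "z \<in> Ge (v d)"
    show "z \<in> R"
    proof (cases "z = 0")
      case True thus ?thesis using R0 by simp
    next
      case False
      hence "v (z / d) = v z - v d" using v_div dn by simp
      hence "z / d \<in> Ge 0" using z False unfolding Ge_def by simp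
      hence "d * (z / d) \<in> R" by (rule dw)
      thus ?thesis using dn by simp
    qed
  qed
  thus ?thesis by blast
qed

definition V where "V = vR R v"

lemma VS_R_nonneg: "u \<in> VS R \<Longrightarrow> u \<ge> 0" using VS_low[OF R_Ge0] by blast
lemma V_iff: "n \<in> V \<longleftrightarrow> int n \<in> VS R"
proof
  assume "n \<in> V"
  then obtain a where a: "a \<in> R" "a \<noteq> 0" "n = nat (v a)" unfolding V_def vR_def by blast
  have "v a \<ge> 0" using VS_R_nonneg[of "v a"] a unfolding VS_mem by blast
  hence "int n = v a" using a by simp
  thus "int n \<in> VS R" using a unfolding VS_mem by metis
next
  assume "int n \<in> VS R"
  then obtain a where a: "a \<in> R" "a \<noteq> 0" "v a = int n" unfolding VS_mem by blast
  thus "n \<in> V" unfolding V_def vR_def by force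
qed

lemma VS_R_add: assumes "u \<in> VS R" "w \<in> VS R" shows "u + w \<in> VS R"
proof -
  obtain a where a: "a \<in> R" "a \<noteq> 0" "v a = u" using assms(1) unfolding VS_mem by blast
  obtain b where b: "b \<in> R" "b \<noteq> 0" "v b = w" using assms(2) unfolding VS_mem by blast
  have "a * b \<in> R" "a * b \<noteq> 0" "v (a * b) = u + w" using Rmult a b v_mult by auto
  thus ?thesis unfolding VS_mem by blast
qed
lemma V_add: "n \<in> V \<Longrightarrow> m \<in> V \<Longrightarrow> n + m \<in> V" using VS_R_add V_iff by simp
lemma V0: "0 \<in> V" using V_iff[of 0] R1 v_one unfolding VS_mem by force

definition cc where "cc = cond R v"
lemma cc_def': "cc = (LEAST c. c \<in> V \<and> (\<forall>j. c + j \<in> V))" unfolding cc_def cond_def V_def by simp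

lemma cc_prop: "cc \<in> V" "\<And>j. cc + j \<in> V"
    "\<And>c'. c' \<in> V \<Longrightarrow> (\<forall>j. c' + j \<in> V) \<Longrightarrow> cc \<le> c'"
proof -
  obtain D where D: "Ge D \<subseteq> R" using cond_ex by blast
  define D0 where "D0 = nat (max D 0)"
  have "\<forall>j. D0 + j \<in> V"
  proof
    fix j
    have "tp (int (D0 + j)) \<in> Ge D" using tp unfolding Ge_def D0_def by simp
    hence "tp (int (D0 + j)) \<in> R" using D by blast
    thus "D0 + j \<in> V" using V_iff tp unfolding VS_mem by blast
  qed
  hence ex: "D0 \<in> V \<and> (\<forall>j. D0 + j \<in> V)" by (metis add_0_right)
  show "cc \<in> V" "\<And>j. cc + j \<in> V" using LeastI[of "\<lambda>c. c \<in> V \<and> (\<forall>j. c + j \<in> V)", OF ex]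
    unfolding cc_def' by auto
  show "\<And>c'. c' \<in> V \<Longrightarrow> (\<forall>j. c' + j \<in> V) \<Longrightarrow> cc \<le> c'" unfolding cc_def' by (rule Least_le) simp
qed

lemma Gecc: "Ge (int cc) \<subseteq> R"
proof -
  obtain D where D: "Ge D \<subseteq> R" using cond_ex by blast
  define L where "L = R \<inter> Ge (int cc)"
  have sR: "Rsubmod R R" unfolding Rsubmod_def using R0 Radd Rmult by blast
  have sL: "Rsubmod R L" unfolding L_def by (rule sm_inter[OF sR Ge_sub])
  have sub: "L \<subseteq> Ge (int cc)" unfolding L_def by blast
  have GL: "Ge (max D (int cc)) \<subseteq> L" unfolding L_def using D Ge_mono[of D "max D (int cc)"]
      Ge_mono[of "int cc" "max D (int cc)"] by auto
  have "VS (Ge (int cc)) \<subseteq> VS L"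
  proof
    fix u assume "u \<in> VS (Ge (int cc))"
    hence u: "u \<ge> int cc" using VS_Ge by blast
    hence "nat u = cc + (nat u - cc)" by linarith
    hence "nat u \<in> V" using cc_prop(2) by metis
    hence "int (nat u) \<in> VS R" using V_iff by blast
    then obtain z where z: "z \<in> R" "z \<noteq> 0" "v z = u" using u unfolding VS_mem by auto
    hence "z \<in> L" unfolding L_def Ge_def using u by simp
    thus "u \<in> VS L" using z unfolding VS_mem by blast
  qed
  hence "Ge (int cc) = L" using eqval[OF sL Ge_sub sub GL] by simp
  thus ?thesis unfolding L_def by blast
qed

lemma conductor_eq: "conductor R = Ge (int cc)"
proof
  show "Ge (int cc) \<subseteq> conductor R"
  proof
    fix z assume z: "z \<in> Ge (int cc)"
    have "z * y \<in> R" if "y \<in> integral_closure R" for y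
      using Ge_mult[OF z, of y 0] that ic_eq Gecc by auto
    thus "z \<in> conductor R" unfolding conductor_def colon_def by blast
  qed
  show "conductor R \<subseteq> Ge (int cc)"
  proof
    fix z assume z: "z \<in> conductor R"
    hence zc: "\<And>y. y \<in> Ge 0 \<Longrightarrow> z * y \<in> R" unfolding conductor_def colon_def ic_eq by blast
    show "z \<in> Ge (int cc)"
    proof (cases "z = 0")
      case True thus ?thesis by simp
    next
      case zn: False
      have zR: "z \<in> R" using zc[of 1] unfolding Ge_def using v_one by simp
      hence vz: "v z \<ge> 0" using R_Ge0 zn unfolding Ge_def by auto
      have all: "\<forall>j. nat (v z) + j \<in> V"
      proof
        fix j
        have "tp (v z + int j) / z \<in> Ge 0" using v_div[of "tp (v z + int j)" z] tp zn unfolding Ge_def by simp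
        hence "z * (tp (v z + int j) / z) \<in> R" by (rule zc)
        hence "tp (v z + int j) \<in> R" using zn by simp
        hence "v z + int j \<in> VS R" using tp unfolding VS_mem by blast
        moreover have "int (nat (v z) + j) = v z + int j" using vz by simp
        ultimately show "nat (v z) + j \<in> V" using V_iff by simp
      qed
      hence "cc \<le> nat (v z)" using cc_prop(3)[of "nat (v z)"] by (metis add_0_right)
      hence "int cc \<le> v z" using vz by linarith
      thus ?thesis unfolding Ge_def by simp
    qed
  qed
qed

lemma VS_R_sub_V: "u \<in> VS R \<Longrightarrow> nat u \<in> V" using V_iff VS_R_nonneg by simp

lemma maxid: "max_ideal R = R \<inter> Ge 1"
proof
  show "R \<inter> Ge 1 \<subseteq> max_ideal R"
  proof
    fix z assume z: "z \<in> R \<inter> Ge 1"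
    show "z \<in> max_ideal R"
    proof (cases "z = 0")
      case True thus ?thesis using z unfolding max_ideal_def by simp
    next
      case False
      hence "v (inverse z) < 0" using v_inv z unfolding Ge_def by simp
      hence "inverse z \<notin> R" using R_Ge0 False unfolding Ge_def by auto
      thus ?thesis using z unfolding max_ideal_def by simp
    qed
  qed
  show "max_ideal R \<subseteq> R \<inter> Ge 1"
  proof
    fix z assume z: "z \<in> max_ideal R"
    hence zR: "z \<in> R" unfolding max_ideal_def by simp
    show "z \<in> R \<inter> Ge 1"
    proof (cases "z = 0 \<or> v z \<ge> 1")
      case True thus ?thesis using zR unfolding Ge_def by auto
    next
      case False
      hence zn: "z \<noteq> 0" and vz0: "v z = 0" using R_Ge0 zR unfolding Ge_def by auto
      have id: "ideal_of R (max_ideal R)" using SS unfolding local_ring_def by blast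
      hence smm: "Rsubmod R (max_ideal R)" unfolding ideal_of_def by blast
      have "inverse z \<in> Ge 0" using v_inv[OF zn] vz0 unfolding Ge_def by simp
      then obtain l where l: "l \<in> R" "inverse z - l = 0 \<or> v (inverse z - l) > 0" using resid by blast
      have eq: "1 - l * z = z * (inverse z - l)" using zn by (simp add: field_simps)
      have "1 - l * z \<in> R \<inter> Ge 1"
      proof (cases "inverse z - l = 0")
        case True thus ?thesis using eq R0 by simp
      next
        case False
        hence "v (1 - l * z) = v z + v (inverse z - l)" using eq v_mult zn by simp
        thus ?thesis using False l vz0 Rdiff[OF R1 Rmult[OF l(1) zR]] unfolding Ge_def by simp
      qed
      hence a: "1 - l * z \<in> max_ideal R" using \<open>R \<inter> Ge 1 \<subseteq> max_ideal R\<close> by blast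
      have b: "l * z \<in> max_ideal R" using smmult[OF smm l(1) z] .
      have "(1 - l * z) + l * z \<in> max_ideal R" using smadd[OF smm a b] .
      hence "1 \<in> max_ideal R" by simp
      thus ?thesis unfolding max_ideal_def using R1 by simp
    qed
  qed
qed

end


context stp begin

lemma sR: "Rsubmod R R" unfolding Rsubmod_def using R0 Radd Rmult by blast

lemma cc_pos: "cc \<ge> 1"
proof (rule ccontr)
  assume "\<not> cc \<ge> 1" hence c0: "cc = 0" by simp
  hence RG: "R = Ge 0" using Gecc R_Ge0 by auto
  have mi: "max_ideal R = Ge 1" using maxid RG Ge_mono[of 0 1] by auto
  have "max_ideal R = Rspan R {tt}"
  proof
    show "max_ideal R \<subseteq> Rspan R {tt}"
    proof
      fix z assume "z \<in> max_ideal R"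
      hence z: "z \<in> Ge 1" using mi by simp
      have "z / tt \<in> Ge 0"
      proof (cases "z = 0")
        case False thus ?thesis using z tt v_div[of z tt] unfolding Ge_def by auto
      qed simp
      hence "z / tt \<in> R" using RG by simp
      hence "\<exists>c. z = (\<Sum>f\<in>{tt}. c f * f) \<and> (\<forall>f\<in>{tt}. c f \<in> R)"
        using tt by (intro exI[of _ "\<lambda>_. z / tt"]) simp
      thus "z \<in> Rspan R {tt}" unfolding Rspan_def by (simp only: mem_Collect_eq)
    qed
    show "Rspan R {tt} \<subseteq> max_ideal R"
    proof
      fix z assume "z \<in> Rspan R {tt}"
      then obtain c where c: "z = (\<Sum>f\<in>{tt}. c f * f)" "c tt \<in> R" unfolding Rspan_def by blast
      hence "z = c tt * tt" by simp
      moreover have "c tt \<in> Ge 0" using c RG by simp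
      moreover have "tt \<in> Ge 1" using tt unfolding Ge_def by simp
      ultimately show "z \<in> max_ideal R" using Ge_mult[of "c tt" 0 tt 1] mi by simp
    qed
  qed
  moreover have "tt \<in> R" using RG tt unfolding Ge_def by simp
  ultimately have "regular_dim1 R" unfolding regular_dim1_def by blast
  thus False using SS by blast
qed

lemma cc1_gap: "cc - 1 \<notin> V"
proof
  assume a: "cc - 1 \<in> V"
  have "\<forall>j. cc - 1 + j \<in> V"
  proof
    fix j show "cc - 1 + j \<in> V"
    proof (cases j)
      case 0 thus ?thesis using a by simp
    next
      case (Suc j') thus ?thesis using cc_prop(2)[of j'] cc_pos by simp
    qed
  qed
  hence "cc \<le> cc - 1" using cc_prop(3) a by blast
  thus False using cc_pos by simp
qed

lemma cc2: "cc \<ge> 2" using cc1_gap cc_pos V0 by (cases "cc = 1") auto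

lemma V_ge: "y \<ge> cc \<Longrightarrow> y \<in> V" using cc_prop(2)[of "y - cc"] by simp

lemma infV: "infinite V"
proof
  assume "finite V"
  then obtain m where m: "\<forall>x\<in>V. x < m" using finite_nat_bounded by blast
  have "max m cc \<in> V" using V_ge by simp
  thus False using m by fastforce
qed

definition ee where "ee = mult_e R v"
lemma ee_def': "ee = (LEAST y. y \<in> V \<and> y > 0)" unfolding ee_def mult_e_def V_def by simp
lemma ee_prop: "ee \<in> V" "ee > 0" "\<And>y. y \<in> V \<Longrightarrow> y > 0 \<Longrightarrow> ee \<le> y"
proof -
  have ex: "cc \<in> V \<and> cc > 0" using cc_prop cc_pos by simp
  show "ee \<in> V" "ee > 0" using LeastI[of "\<lambda>y. y \<in> V \<and> y > 0", OF ex] unfolding ee_def' by auto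
  show "\<And>y. y \<in> V \<Longrightarrow> y > 0 \<Longrightarrow> ee \<le> y" unfolding ee_def' by (rule Least_le) simp
qed
lemma ee_le_cc: "ee \<le> cc" using ee_prop(3) cc_prop(1) cc_pos by simp
lemma ee2: "ee \<ge> 2"
proof (rule ccontr)
  assume "\<not> ee \<ge> 2" hence e1: "ee = 1" using ee_prop(2) by simp
  have "j \<in> V" for j
  proof (induction j)
    case 0 show ?case by (rule V0)
  next
    case (Suc j) thus ?case using V_add[OF Suc ee_prop(1)] e1 by simp
  qed
  thus False using cc1_gap by blast
qed

lemma fr_intro: "Rsubmod R N \<Longrightarrow> Rsubmod R M \<Longrightarrow> N \<subseteq> M \<Longrightarrow> Ge a \<subseteq> N \<Longrightarrow> M \<subseteq> Ge b \<Longrightarrow> fr N M a b"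
  unfolding fr_def by blast

definition gaps where "gaps = {..<cc} - V"

lemma VS_Ge0_R: "VS (Ge 0) - VS R = int ` gaps"
proof
  show "VS (Ge 0) - VS R \<subseteq> int ` gaps"
  proof
    fix u assume u: "u \<in> VS (Ge 0) - VS R"
    hence u0: "u \<ge> 0" using VS_Ge by blast
    have "nat u \<notin> V" using u u0 V_iff by simp
    moreover hence "nat u < cc" using V_ge by (meson not_le)
    ultimately have "nat u \<in> gaps" unfolding gaps_def by simp
    thus "u \<in> int ` gaps" using u0 by (metis image_eqI int_nat_eq)
  qed
  show "int ` gaps \<subseteq> VS (Ge 0) - VS R"
    unfolding gaps_def using V_iff VS_Ge by auto
qed

definition dd where "dd = delta R"
lemma dd_eq: "dd = card gaps"
proof -
  have f: "fr R (Ge 0) (int cc) 0" using fr_intro[OF sR Ge_sub R_Ge0 Gecc] by simp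
  have "dd = card (VS (Ge 0) - VS R)" unfolding dd_def delta_def ic_eq using len_eq[OF f] .
  also have "\<dots> = card gaps" unfolding VS_Ge0_R by (simp add: card_image)
  finally show ?thesis .
qed

definition NN where "NN = nn R v"
lemma NN_eq: "NN = card (V \<inter> {..<cc})" and dd_le: "dd \<le> cc"
proof -
  have "{..<cc} = (V \<inter> {..<cc}) \<union> gaps" "(V \<inter> {..<cc}) \<inter> gaps = {}" unfolding gaps_def by auto
  hence "cc = card (V \<inter> {..<cc}) + card gaps"
    using card_Un_disjoint[of "V \<inter> {..<cc}" gaps] unfolding gaps_def by simp
  thus "NN = card (V \<inter> {..<cc})" "dd \<le> cc" unfolding NN_def nn_def dd_eq cc_def[symmetric] dd_def[symmetric]
    by (simp_all add: dd_eq)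
qed

definition sq where "sq = sv R v"
lemma sqdef': "sq i = enumerate V i" unfolding sq_def sv_def V_def by simp
lemma s_in: "sq i \<in> V" unfolding sqdef' using enumerate_in_set[OF infV] .
lemma s_mono: "i < j \<Longrightarrow> sq i < sq j" unfolding sqdef' using enumerate_mono[OF _ infV] by blast
lemma s_mono_iff: "sq i < sq j \<longleftrightarrow> i < j" unfolding sqdef' using infV by simp
lemma s_le_iff: "sq i \<le> sq j \<longleftrightarrow> i \<le> j" unfolding sqdef' using infV by simp
lemma s_surj: "y \<in> V \<Longrightarrow> \<exists>m. sq m = y" unfolding sqdef' using range_enumerate[OF infV] by (metis rangeE)

lemma below: "{y \<in> V. y < sq j} = sq ` {..<j}"
proof
  show "{y \<in> V. y < sq j} \<subseteq> sq ` {..<j}"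
  proof
    fix y assume y: "y \<in> {y \<in> V. y < sq j}"
    then obtain m where m: "sq m = y" using s_surj by blast
    hence "m < j" using y s_mono_iff by auto
    thus "y \<in> sq ` {..<j}" using m by blast
  qed
  show "sq ` {..<j} \<subseteq> {y \<in> V. y < sq j}" using s_in s_mono by auto
qed
lemma card_below: "card {y \<in> V. y < sq j} = j"
proof -
  have "inj sq" unfolding sqdef' using inj_enumerate[OF infV] .
  thus ?thesis unfolding below by (simp add: card_image inj_on_subset)
qed

lemma s_NN: "sq NN = cc"
proof -
  obtain m where m: "sq m = cc" using s_surj cc_prop(1) by blast
  have "card {y \<in> V. y < sq m} = m" by (rule card_below)
  moreover have "{y \<in> V. y < sq m} = V \<inter> {..<cc}" using m by auto
  ultimately show ?thesis using NN_eq m by simp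
qed
lemma s0: "sq 0 = 0"
proof -
  obtain m where m: "sq m = 0" using s_surj V0 by blast
  have "sq 0 \<le> sq m" using s_le_iff[of 0 m] by simp
  thus ?thesis using m by simp
qed
lemma s_next: "y \<in> V \<Longrightarrow> sq j < y \<Longrightarrow> sq (Suc j) \<le> y"
  using s_surj s_mono_iff s_le_iff by (metis Suc_leI)

definition Rf where "Rf i = Rfilt R v i"
lemma Rf_eq: "Rf i = R \<inter> Ge (int (sq i))" unfolding Rf_def Rfilt_def sq_def Ge_def by auto
lemma Rf_sub: "Rsubmod R (Rf i)" unfolding Rf_eq by (rule sm_inter[OF sR Ge_sub])
lemma Rf0: "Rf 0 = R" unfolding Rf_eq s0 using R_Ge0 by auto
lemma RfNN: "Rf NN = Ge (int cc)" unfolding Rf_eq s_NN using Gecc by auto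
lemma Rf_anti: assumes "i \<le> j" shows "Rf j \<subseteq> Rf i"
proof -
  have "int (sq i) \<le> int (sq j)" using s_le_iff[of i j] assms by simp
  thus ?thesis unfolding Rf_eq using Ge_mono by blast
qed
lemma Rf_Ge: "i \<le> NN \<Longrightarrow> Ge (int cc) \<subseteq> Rf i" using Rf_anti RfNN by metis

definition Q where "Q i = colon R (Rf i)"
lemma Q_sub: "Rsubmod R (Q i)" unfolding Q_def colon_def Rsubmod_def
proof (intro conjI ballI)
  show "0 \<in> {z. \<forall>y\<in>Rf i. z * y \<in> R}" using R0 by simp
next
  fix x y assume "x \<in> {z. \<forall>y\<in>Rf i. z * y \<in> R}" "y \<in> {z. \<forall>y\<in>Rf i. z * y \<in> R}"
  thus "x + y \<in> {z. \<forall>y\<in>Rf i. z * y \<in> R}" using Radd by (simp add: distrib_right)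
next
  fix a x assume "a \<in> R" "x \<in> {z. \<forall>y\<in>Rf i. z * y \<in> R}"
  thus "a * x \<in> {z. \<forall>y\<in>Rf i. z * y \<in> R}" using Rmult by (simp add: mult.assoc)
qed
lemma R_Q: "R \<subseteq> Q i" unfolding Q_def colon_def using Rmult Rf_eq by auto
lemma Q_mono: "i \<le> j \<Longrightarrow> Q i \<subseteq> Q j" unfolding Q_def colon_def using Rf_anti by blast
lemma Q_low: "i \<le> NN \<Longrightarrow> Q i \<subseteq> Ge (- int cc)"
proof
  fix z assume i: "i \<le> NN" and z: "z \<in> Q i"
  have "tp (int cc) \<in> Rf i" using Rf_Ge[OF i] tp unfolding Ge_def by auto
  hence "z * tp (int cc) \<in> R" using z unfolding Q_def colon_def by blast
  hence "z * tp (int cc) \<in> Ge 0" using R_Ge0 by blast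
  thus "z \<in> Ge (- int cc)"
  proof (cases "z = 0")
    case False thus ?thesis using \<open>z * tp (int cc) \<in> Ge 0\<close> v_mult[of z "tp (int cc)"] tp unfolding Ge_def by auto
  qed simp
qed
lemma Q0: "Q 0 = R"
proof
  show "Q 0 \<subseteq> R" unfolding Q_def colon_def Rf0 using R1 by force
qed (rule R_Q)
lemma QNN: "Q NN = Ge 0"
proof
  show "Ge 0 \<subseteq> Q NN" unfolding Q_def colon_def RfNN using Ge_mult[of _ 0 _ "int cc"] Gecc by auto
  show "Q NN \<subseteq> Ge 0"
  proof
    fix z assume z: "z \<in> Q NN"
    show "z \<in> Ge 0"
    proof (rule ccontr)
      assume "z \<notin> Ge 0"
      hence zn: "z \<noteq> 0" and vz: "v z < 0" unfolding Ge_def by auto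
      define w where "w = tp (int cc - 1 - v z)"
      have w: "w \<noteq> 0" "v w = int cc - 1 - v z" unfolding w_def using tp by auto
      hence "w \<in> Ge (int cc)" using vz unfolding Ge_def by simp
      hence "z * w \<in> R" using z unfolding Q_def colon_def RfNN by blast
      moreover have "z * w \<noteq> 0" "v (z * w) = int (cc - 1)" using w zn v_mult cc_pos by auto
      ultimately have "int (cc - 1) \<in> VS R" unfolding VS_mem by blast
      thus False using V_iff cc1_gap by blast
    qed
  qed
qed

lemma fr_Q: "i \<le> j \<Longrightarrow> j \<le> NN \<Longrightarrow> fr (Q i) (Q j) (int cc) (- int cc)"
  using fr_intro[OF Q_sub Q_sub Q_mono Gecc[THEN subset_trans, OF R_Q] Q_low] by blast

definition rI where "rI i = ri R v i"
lemma rr_eq: "1 \<le> i \<Longrightarrow> i \<le> NN \<Longrightarrow> rI i = card (VS (Q i) - VS (Q (i - 1)))"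
  unfolding rI_def ri_def Rf_def[symmetric] Q_def[symmetric] using len_eq[OF fr_Q] by simp

lemma telescope: "j \<le> m \<Longrightarrow> m \<le> NN \<Longrightarrow> (\<Sum>i\<in>{Suc j..m}. rI i) = card (VS (Q m) - VS (Q j))"
proof (induction m)
  case 0 thus ?case by simp
next
  case (Suc m)
  show ?case
  proof (cases "j = Suc m")
    case True thus ?thesis by simp
  next
    case False
    hence jm: "j \<le> m" using Suc.prems by simp
    have IH: "(\<Sum>i\<in>{Suc j..m}. rI i) = card (VS (Q m) - VS (Q j))" using Suc jm by simp
    have "{Suc j..Suc m} = insert (Suc m) {Suc j..m}" using jm by auto
    hence "(\<Sum>i\<in>{Suc j..Suc m}. rI i) = rI (Suc m) + (\<Sum>i\<in>{Suc j..m}. rI i)" by simp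
    also have "\<dots> = card (VS (Q (Suc m)) - VS (Q m)) + card (VS (Q m) - VS (Q j))"
      using rr_eq[of "Suc m"] Suc.prems IH by simp
    also have "\<dots> = card (VS (Q (Suc m)) - VS (Q j))"
    proof -
      have a: "VS (Q j) \<subseteq> VS (Q m)" "VS (Q m) \<subseteq> VS (Q (Suc m))" using VS_mono Q_mono jm by auto
      have f: "finite (VS (Q (Suc m)) - VS (Q j))"
        using VS_fin(2)[OF Gecc[THEN subset_trans, OF R_Q] Q_low[OF Suc.prems(2)]] .
      have "VS (Q (Suc m)) - VS (Q j) = (VS (Q (Suc m)) - VS (Q m)) \<union> (VS (Q m) - VS (Q j))"
        "(VS (Q (Suc m)) - VS (Q m)) \<inter> (VS (Q m) - VS (Q j)) = {}" using a by auto
      thus ?thesis using f card_Un_disjoint[of "VS (Q (Suc m)) - VS (Q m)" "VS (Q m) - VS (Q j)"]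
        by (metis finite_Un)
    qed
    finally show ?thesis .
  qed
qed

lemma sum_rr: "(\<Sum>i\<in>{1..NN}. rI i) = dd"
proof -
  have "(\<Sum>i\<in>{Suc 0..NN}. rI i) = card (VS (Q NN) - VS (Q 0))" by (rule telescope) auto
  thus ?thesis unfolding QNN Q0 VS_Ge0_R dd_eq by (simp add: card_image)
qed

end


context stp begin

definition Qm where "Qm = colon R (max_ideal R)"
lemma Qm_sub: "Rsubmod R Qm" unfolding Qm_def colon_def Rsubmod_def
proof (intro conjI ballI)
  show "0 \<in> {z. \<forall>y\<in>max_ideal R. z * y \<in> R}" using R0 by simp
next
  fix x y assume "x \<in> {z. \<forall>y\<in>max_ideal R. z * y \<in> R}" "y \<in> {z. \<forall>y\<in>max_ideal R. z * y \<in> R}"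
  thus "x + y \<in> {z. \<forall>y\<in>max_ideal R. z * y \<in> R}" using Radd by (simp add: distrib_right)
next
  fix a x assume "a \<in> R" "x \<in> {z. \<forall>y\<in>max_ideal R. z * y \<in> R}"
  thus "a * x \<in> {z. \<forall>y\<in>max_ideal R. z * y \<in> R}" using Rmult by (simp add: mult.assoc)
qed
lemma R_Qm: "R \<subseteq> Qm" unfolding Qm_def colon_def maxid using Rmult by auto
lemma Qm_low: "Qm \<subseteq> Ge (- int cc)"
proof
  fix z assume z: "z \<in> Qm"
  have "tp (int cc) \<in> Ge (int cc)" using tp unfolding Ge_def by simp
  hence "tp (int cc) \<in> max_ideal R" unfolding maxid using Gecc Ge_mono[of 1 "int cc"] cc_pos by auto
  hence "z * tp (int cc) \<in> R" using z unfolding Qm_def colon_def by blast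
  hence "z * tp (int cc) \<in> Ge 0" using R_Ge0 by blast
  thus "z \<in> Ge (- int cc)"
  proof (cases "z = 0")
    case False thus ?thesis using \<open>z * tp (int cc) \<in> Ge 0\<close> v_mult[of z "tp (int cc)"] tp unfolding Ge_def by auto
  qed simp
qed
lemma fr_Qm: "fr R Qm (int cc) (- int cc)" by (rule fr_intro[OF sR Qm_sub R_Qm Gecc Qm_low])

definition rty where "rty = ctype R"
lemma r_eq: "rty = card (VS Qm - VS R)"
  unfolding rty_def ctype_def Qm_def[symmetric] using len_eq[OF fr_Qm] .

lemma fin_VQ: "i \<le> j \<Longrightarrow> j \<le> NN \<Longrightarrow> finite (VS (Q j) - VS (Q i))"
  using fr_Q[of i j] unfolding fr_def using VS_fin(2) by blast

lemma rr_ge1: assumes i: "1 \<le> i" "i \<le> NN" shows "rI i \<ge> 1"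
proof -
  define j where "j = i - 1"
  have ij: "i = Suc j" using i unfolding j_def by simp
  define u where "u = int cc - 1 - int (sq j)"
  have sij: "sq j < sq i" using s_mono ij by simp
  have "tp u \<in> Q i" unfolding Q_def colon_def
  proof (intro CollectI ballI)
    fix y assume y: "y \<in> Rf i"
    hence "y \<in> Ge (int (sq i))" unfolding Rf_eq by blast
    moreover have "tp u \<in> Ge u" using tp unfolding Ge_def by simp
    ultimately have "tp u * y \<in> Ge (u + int (sq i))" using Ge_mult by blast
    moreover have "u + int (sq i) \<ge> int cc" unfolding u_def using sij by simp
    ultimately show "tp u * y \<in> R" using Ge_mono Gecc by blast
  qed
  hence uQi: "u \<in> VS (Q i)" using tp unfolding VS_mem by blast
  have "u \<notin> VS (Q j)"
  proof
    assume "u \<in> VS (Q j)"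
    then obtain w where w: "w \<in> Q j" "w \<noteq> 0" "v w = u" unfolding VS_mem by blast
    have "int (sq j) \<in> VS R" using s_in V_iff by blast
    then obtain y where y: "y \<in> R" "y \<noteq> 0" "v y = int (sq j)" unfolding VS_mem by blast
    hence "y \<in> Rf j" unfolding Rf_eq Ge_def by simp
    hence "w * y \<in> R" using w unfolding Q_def colon_def by blast
    moreover have "w * y \<noteq> 0" "v (w * y) = int (cc - 1)" using w y v_mult cc_pos unfolding u_def by auto
    ultimately have "int (cc - 1) \<in> VS R" unfolding VS_mem by blast
    thus False using V_iff cc1_gap by blast
  qed
  hence "u \<in> VS (Q i) - VS (Q (i - 1))" using uQi ij by simp
  hence "VS (Q i) - VS (Q (i - 1)) \<noteq> {}" by blast
  moreover have "finite (VS (Q i) - VS (Q (i - 1)))" using fin_VQ i by simp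
  ultimately show ?thesis using rr_eq[OF i] by (simp add: Suc_le_eq card_gt_0_iff)
qed

lemma chain_bounds: assumes C: "chain L N M n" and k: "k \<le> n" shows "N \<subseteq> L k" "L k \<subseteq> M"
proof -
  have L0: "L 0 = N" and Ln: "L n = M"
    and Lst: "\<And>i. i < n \<Longrightarrow> L i \<subset> L (Suc i)" using C unfolding chain_def by auto
  have mono: "L i \<subseteq> L (i + j)" if "i + j \<le> n" for i j using that
  proof (induction j)
    case 0 show ?case by simp
  next
    case (Suc j)
    have "L (i + j) \<subset> L (Suc (i + j))" using Lst[of "i + j"] Suc.prems by simp
    moreover have "L i \<subseteq> L (i + j)" using Suc by simp
    ultimately show ?case by simp
  qed
  show "N \<subseteq> L k" using mono[of 0 k] k L0 by simp
  show "L k \<subseteq> M" using mono[of k "n - k"] k Ln by simp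
qed

definition scl :: "'a \<Rightarrow> 'a set \<Rightarrow> 'a set" where "scl y M = (\<lambda>z. y * z) ` M"
lemma scl_sub: "Rsubmod R M \<Longrightarrow> Rsubmod R (scl y M)" unfolding Rsubmod_def scl_def
proof (intro conjI ballI)
  assume M: "0 \<in> M \<and> (\<forall>x\<in>M. \<forall>y\<in>M. x + y \<in> M) \<and> (\<forall>a\<in>R. \<forall>x\<in>M. a * x \<in> M)"
  show "0 \<in> (*) y ` M" using M by force
  fix a b assume "a \<in> (*) y ` M" "b \<in> (*) y ` M"
  then obtain a' b' where "a = y * a'" "b = y * b'" "a' \<in> M" "b' \<in> M" by blast
  moreover have "a' + b' \<in> M" using M calculation by blast
  ultimately show "a + b \<in> (*) y ` M" by (metis distrib_left image_eqI)
next
  fix a b assume M: "0 \<in> M \<and> (\<forall>x\<in>M. \<forall>y\<in>M. x + y \<in> M) \<and> (\<forall>a\<in>R. \<forall>x\<in>M. a * x \<in> M)"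
    and a: "a \<in> R" and "b \<in> (*) y ` M"
  then obtain b' where "b = y * b'" "b' \<in> M" by blast
  moreover have "a * b' \<in> M" using M a calculation by blast
  ultimately show "a * b \<in> (*) y ` M" by (metis mult.left_commute image_eqI)
qed
lemma scl_mono: "A \<subseteq> B \<Longrightarrow> scl y A \<subseteq> scl y B" unfolding scl_def by blast
lemma VS_scl: assumes "y \<noteq> 0" shows "VS (scl y M) = (\<lambda>u. v y + u) ` VS M"
proof
  show "VS (scl y M) \<subseteq> (\<lambda>u. v y + u) ` VS M"
  proof
    fix u assume "u \<in> VS (scl y M)"
    then obtain z where "z \<in> M" "y * z \<noteq> 0" "v (y * z) = u" unfolding VS_mem scl_def by blast
    moreover hence "z \<noteq> 0" by auto
    ultimately have "v z \<in> VS M" "u = v y + v z" using v_mult[OF assms] unfolding VS_mem by auto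
    thus "u \<in> (\<lambda>u. v y + u) ` VS M" by blast
  qed
  show "(\<lambda>u. v y + u) ` VS M \<subseteq> VS (scl y M)"
  proof
    fix u assume "u \<in> (\<lambda>u. v y + u) ` VS M"
    then obtain u' where u': "u' \<in> VS M" "u = v y + u'" by blast
    then obtain z where z: "z \<in> M" "z \<noteq> 0" "u = v y + v z" unfolding VS_mem by blast
    hence "y * z \<in> scl y M" "y * z \<noteq> 0" "v (y * z) = u" using assms v_mult unfolding scl_def by auto
    thus "u \<in> VS (scl y M)" unfolding VS_mem by blast
  qed
qed

lemma pls_strict: assumes P: "Rsubmod R P" and A: "Rsubmod R A" and AB: "A \<subseteq> B" and BP: "B \<subseteq> P"
  and PA: "P \<inter> R \<subseteq> A" and eq: "pls A R = pls B R" shows "A = B"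
proof -
  have "B \<subseteq> A"
  proof
    fix z assume z: "z \<in> B"
    hence "z \<in> pls B R" using pls_sub1[OF sR] by blast
    hence "z \<in> pls A R" using eq by simp
    then obtain a q where aq: "a \<in> A" "q \<in> R" "z = a + q" by (rule pls_E)
    have "q = z - a" using aq by simp
    moreover have "z - a \<in> P" using smdiff[OF P] z aq AB BP by blast
    ultimately have "q \<in> A" using PA aq by blast
    thus "z \<in> A" using smadd[OF A aq(1)] aq by simp
  qed
  thus ?thesis using AB by blast
qed

lemma rr_le_r: assumes i: "1 \<le> i" "i \<le> NN" shows "rI i \<le> rty"
proof -
  define j where "j = i - 1"
  have ij: "i = Suc j" using i unfolding j_def by simp
  have jN: "j \<le> NN" using i ij by simp
  have "int (sq j) \<in> VS R" using s_in V_iff by blast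
  then obtain y where y: "y \<in> R" "y \<noteq> 0" "v y = int (sq j)" unfolding VS_mem by blast
  have yRf: "y \<in> Rf j" using y unfolding Rf_eq Ge_def by simp
  define P where "P = scl y (Q i)"
  define P0 where "P0 = scl y (Q j)"
  have sP: "Rsubmod R P" unfolding P_def by (rule scl_sub[OF Q_sub])
  have sP0: "Rsubmod R P0" unfolding P0_def by (rule scl_sub[OF Q_sub])
  have P0P: "P0 \<subseteq> P" unfolding P0_def P_def using scl_mono[OF Q_mono] ij by simp
  have cardP: "card (VS P - VS P0) = rI i"
  proof -
    have "VS P - VS P0 = (\<lambda>u. v y + u) ` (VS (Q i) - VS (Q j))"
      unfolding P_def P0_def VS_scl[OF y(2)] by (simp add: image_set_diff inj_on_def)
    hence "card (VS P - VS P0) = card (VS (Q i) - VS (Q j))" by (simp add: card_image inj_on_def)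
    thus ?thesis using rr_eq[OF i] ij by simp
  qed
  have P0R: "P0 \<subseteq> R"
  proof
    fix z assume "z \<in> P0"
    then obtain w where "w \<in> Q j" "z = y * w" unfolding P0_def scl_def by blast
    thus "z \<in> R" using yRf unfolding Q_def colon_def by (auto simp: mult.commute)
  qed
  have PR: "P \<inter> R \<subseteq> P0"
  proof
    fix z assume z: "z \<in> P \<inter> R"
    then obtain w where w: "w \<in> Q i" "z = y * w" unfolding P_def scl_def by blast
    have "w \<in> Q j" unfolding Q_def colon_def
    proof (intro CollectI ballI)
      fix a assume a: "a \<in> Rf j"
      show "w * a \<in> R"
      proof (cases "a \<in> Rf i")
        case True thus ?thesis using w unfolding Q_def colon_def by blast
      next
        case False
        have aR: "a \<in> R" and an: "a \<noteq> 0" and va: "v a \<ge> int (sq j)" using a False Rf_eq unfolding Ge_def by auto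
        have "nat (v a) \<in> V" using aR an VS_R_sub_V unfolding VS_mem by blast
        moreover have "\<not> sq i \<le> nat (v a)"
        proof
          assume "sq i \<le> nat (v a)"
          hence "int (sq i) \<le> v a" using va by linarith
          thus False using False aR an unfolding Rf_eq Ge_def by auto
        qed
        ultimately have "\<not> sq j < nat (v a)" using s_next ij by auto
        hence vaj: "v a = int (sq j)" using va by linarith
        have "v (a / y) = 0" using v_div[OF an y(2)] vaj y by simp
        hence "a / y \<in> Ge 0" unfolding Ge_def by simp
        then obtain l where l: "l \<in> R" "a / y - l = 0 \<or> v (a / y - l) > 0" using resid by blast
        have eq: "a - l * y = y * (a / y - l)" using y(2) by (simp add: field_simps)
        have "a - l * y \<in> Rf i"
        proof (cases "a - l * y = 0")
          case True thus ?thesis using Rf_sub sm0 by simp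
        next
          case nz: False
          hence ne: "a / y - l \<noteq> 0" using eq by auto
          hence "v (a - l * y) = v y + v (a / y - l)" using eq v_mult[OF y(2) ne] by simp
          hence gt: "v (a - l * y) > int (sq j)" using ne l y by simp
          have alR: "a - l * y \<in> R" using Rdiff[OF aR Rmult[OF l(1) y(1)]] .
          hence "nat (v (a - l * y)) \<in> V" using nz VS_R_sub_V unfolding VS_mem by blast
          moreover have "sq j < nat (v (a - l * y))" using gt by linarith
          ultimately have "sq i \<le> nat (v (a - l * y))" using s_next ij by simp
          hence "int (sq i) \<le> v (a - l * y)" using gt by linarith
          thus ?thesis unfolding Rf_eq Ge_def using alR by simp
        qed
        hence "w * (a - l * y) \<in> R" using w unfolding Q_def colon_def by blast
        moreover have "w * y \<in> R" using z w by (simp add: mult.commute)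
        moreover have "w * a = w * (a - l * y) + l * (w * y)" by (simp add: algebra_simps)
        ultimately show ?thesis using Radd Rmult[OF l(1)] by simp
      qed
    qed
    thus "z \<in> P0" unfolding P0_def scl_def using w by blast
  qed
  have PQm: "P \<subseteq> Qm"
  proof
    fix z assume "z \<in> P"
    then obtain w where w: "w \<in> Q i" "z = y * w" unfolding P_def scl_def by blast
    show "z \<in> Qm" unfolding Qm_def colon_def
    proof (intro CollectI ballI)
      fix m assume m: "m \<in> max_ideal R"
      show "z * m \<in> R"
      proof (cases "m = 0")
        case True thus ?thesis using R0 by simp
      next
        case mn: False
        have mR: "m \<in> R" and vm: "v m \<ge> 1" using m mn unfolding maxid Ge_def by auto
        have ym: "y * m \<in> R" "y * m \<noteq> 0" using Rmult y mR mn by auto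
        have vym: "v (y * m) > int (sq j)" using v_mult[OF y(2) mn] y vm by simp
        have "nat (v (y * m)) \<in> V" using ym VS_R_sub_V unfolding VS_mem by blast
        moreover have "sq j < nat (v (y * m))" using vym by linarith
        ultimately have "sq i \<le> nat (v (y * m))" using s_next ij by simp
        hence "int (sq i) \<le> v (y * m)" using vym by linarith
        hence "y * m \<in> Rf i" unfolding Rf_eq Ge_def using ym by simp
        hence "w * (y * m) \<in> R" using w unfolding Q_def colon_def by blast
        thus ?thesis using w by (simp add: algebra_simps)
      qed
    qed
  qed
  have P_low: "P \<subseteq> Ge (- int cc)"
  proof
    fix z assume "z \<in> P"
    then obtain w where w: "w \<in> Q i" "z = y * w" unfolding P_def scl_def by blast
    have "w \<in> Ge (- int cc)" using Q_low[OF i(2)] w by blast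
    moreover have "y \<in> Ge 0" using y R_Ge0 by blast
    ultimately show "z \<in> Ge (- int cc)" using Ge_mult[of y 0 w "- int cc"] w by simp
  qed
  have P0_Ge: "Ge (int cc + int (sq j)) \<subseteq> P0"
  proof
    fix z assume z: "z \<in> Ge (int cc + int (sq j))"
    have "z / y \<in> Ge (int cc)"
    proof (cases "z = 0")
      case False thus ?thesis using z v_div[OF False y(2)] y unfolding Ge_def by simp
    qed simp
    hence "z / y \<in> Q j" using Gecc R_Q by blast
    moreover have "z = y * (z / y)" using y by simp
    ultimately show "z \<in> P0" unfolding P0_def scl_def by blast
  qed
  have frP: "fr P0 P (int cc + int (sq j)) (- int cc)" by (rule fr_intro[OF sP0 sP P0P P0_Ge P_low])
  define p where "p = card (VS P - VS P0)"
  obtain L where L: "chain L P0 P p" using chain_ex[OF frP] unfolding p_def by blast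
  have L0: "L 0 = P0" and Lp: "L p = P" and Ls: "\<And>k. k \<le> p \<Longrightarrow> Rsubmod R (L k)"
    and Lst: "\<And>k. k < p \<Longrightarrow> L k \<subset> L (Suc k)" using L unfolding chain_def by auto
  define L' where "L' = (\<lambda>k. pls (L k) R)"
  have L'0: "L' 0 = R"
  proof -
    have "pls P0 R \<subseteq> R" by (rule pls_le[OF sR P0R]) simp
    moreover have "R \<subseteq> pls P0 R" by (rule pls_sub2[OF sP0])
    ultimately show ?thesis unfolding L'_def L0 by blast
  qed
  have "chain L' R (pls P R) p" unfolding chain_def
  proof (intro conjI allI impI)
    show "L' 0 = R" by (rule L'0)
    show "L' p = pls P R" unfolding L'_def Lp ..
  next
    fix k assume "k \<le> p"
    thus "Rsubmod R (L' k)" unfolding L'_def using sm_pls[OF Ls sR] by simp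
  next
    fix k assume k: "k < p"
    have st: "L k \<subset> L (Suc k)" using Lst[OF k] .
    have sub: "L' k \<subseteq> L' (Suc k)"
    proof
      fix z assume "z \<in> L' k"
      then obtain a q where "a \<in> L k" "q \<in> R" "z = a + q" unfolding L'_def by (rule pls_E)
      moreover hence "a \<in> L (Suc k)" using st by blast
      ultimately show "z \<in> L' (Suc k)" unfolding L'_def using pls_I by blast
    qed
    have "L' k \<noteq> L' (Suc k)"
    proof
      assume eq: "L' k = L' (Suc k)"
      have kp: "k \<le> p" "Suc k \<le> p" using k by auto
      have "L k = L (Suc k)"
      proof (rule pls_strict[OF sP])
        show "Rsubmod R (L k)" using Ls[OF kp(1)] .
        show "L k \<subseteq> L (Suc k)" using st by blast
        show "L (Suc k) \<subseteq> P" using chain_bounds(2)[OF L kp(2)] .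
        have "P0 \<subseteq> L k" using chain_bounds(1)[OF L kp(1)] .
        thus "P \<inter> R \<subseteq> L k" using PR by (rule subset_trans[rotated])
        show "pls (L k) R = pls (L (Suc k)) R" using eq unfolding L'_def .
      qed
      thus False using st by simp
    qed
    thus "L' k \<subset> L' (Suc k)" using sub by (rule psubsetI[rotated])
  qed
  moreover have frR: "fr R (pls P R) (int cc) (- int cc)"
  proof (rule fr_intro[OF sR sm_pls[OF sP sR] pls_sub2[OF sP] Gecc])
    have "R \<subseteq> Ge (- int cc)" using R_Ge0 Ge_mono[of "- int cc" 0] by simp
    thus "pls P R \<subseteq> Ge (- int cc)" using pls_le[OF Ge_sub P_low] by blast
  qed
  ultimately have "p \<le> card (VS (pls P R) - VS R)" using chain_le[OF frR] by blast
  also have "\<dots> \<le> card (VS Qm - VS R)"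
  proof (rule card_mono)
    show "finite (VS Qm - VS R)" using VS_fin(2)[OF Gecc Qm_low] .
    have "pls P R \<subseteq> Qm" using pls_le[OF Qm_sub PQm R_Qm] .
    thus "VS (pls P R) - VS R \<subseteq> VS Qm - VS R" using VS_mono by blast
  qed
  finally show ?thesis using cardP r_eq unfolding p_def by simp
qed

end


context stp begin

lemma Least_i0:
  assumes h: "sq (i0 - 1) = (LEAST y. y \<in> V \<and> int y \<ge> int cc - int ee)"
  shows "cc - ee \<le> sq (i0 - 1)" "\<And>y. y \<in> V \<Longrightarrow> cc - ee \<le> y \<Longrightarrow> sq (i0 - 1) \<le> y"
proof -
  have ex: "cc \<in> V \<and> int cc \<ge> int cc - int ee" using cc_prop(1) by simp
  have "int (sq (i0 - 1)) \<ge> int cc - int ee" using LeastI[of "\<lambda>y. y \<in> V \<and> int y \<ge> int cc - int ee", OF ex] h by simp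
  thus "cc - ee \<le> sq (i0 - 1)" using ee_le_cc by linarith
  fix y assume "y \<in> V" "cc - ee \<le> y"
  hence "y \<in> V \<and> int y \<ge> int cc - int ee" using ee_le_cc by linarith
  hence "(LEAST y. y \<in> V \<and> int y \<ge> int cc - int ee) \<le> y" by (rule Least_le)
  thus "sq (i0 - 1) \<le> y" using h by simp
qed

definition T4 where "T4 = {y \<in> V. cc - ee \<le> y \<and> y < cc}"

lemma T4_eq: assumes i0: "1 \<le> i0" "i0 \<le> NN"
  and h: "sq (i0 - 1) = (LEAST y. y \<in> V \<and> int y \<ge> int cc - int ee)"
  shows "T4 = sq ` {i0 - 1..<NN}" "card T4 = card {i0..NN}"
proof -
  show e: "T4 = sq ` {i0 - 1..<NN}"
  proof
    show "T4 \<subseteq> sq ` {i0 - 1..<NN}"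
    proof
      fix y assume y: "y \<in> T4"
      then obtain m where m: "sq m = y" using s_surj unfolding T4_def by blast
      have "sq m < sq NN" using y m s_NN unfolding T4_def by auto
      hence "m < NN" using s_mono_iff by blast
      moreover have "i0 - 1 \<le> m" using Least_i0(2)[OF h, of y] y m s_le_iff unfolding T4_def by auto
      ultimately show "y \<in> sq ` {i0 - 1..<NN}" using m by auto
    qed
    show "sq ` {i0 - 1..<NN} \<subseteq> T4"
    proof
      fix y assume "y \<in> sq ` {i0 - 1..<NN}"
      then obtain m where m: "i0 - 1 \<le> m" "m < NN" "y = sq m" by auto
      have "sq (i0 - 1) \<le> sq m" using m s_le_iff by simp
      moreover have "sq m < cc" using m s_mono s_NN by metis
      ultimately show "y \<in> T4" unfolding T4_def using Least_i0(1)[OF h] m s_in by auto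
    qed
  qed
  have "inj sq" using s_mono_iff by (metis injI less_irrefl_nat nat_neq_iff)
  hence "card T4 = card {i0 - 1..<NN}" unfolding e by (simp add: card_image inj_on_subset)
  also have "\<dots> = card {i0..NN}" using i0 by simp
  finally show "card T4 = card {i0..NN}" .
qed

definition T1 where "T1 = {y \<in> V. y < cc \<and> \<not> (ee \<le> y \<and> y - ee \<in> V)}"

lemma card_T1: "card T1 = card T4"
proof -
  define T where "T = {y \<in> V. y < cc}"
  define T2 where "T2 = {y \<in> V. y < cc \<and> ee \<le> y \<and> y - ee \<in> V}"
  define T3 where "T3 = {y \<in> V. y < cc - ee}"
  have fT: "finite T" unfolding T_def by (rule finite_subset[of _ "{..<cc}"]) auto
  have T2e: "T2 = (\<lambda>y. y + ee) ` T3"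
  proof
    show "T2 \<subseteq> (\<lambda>y. y + ee) ` T3"
    proof
      fix y assume y: "y \<in> T2"
      hence "y - ee \<in> T3" "y = (y - ee) + ee" unfolding T2_def T3_def by auto
      thus "y \<in> (\<lambda>y. y + ee) ` T3" by blast
    qed
    show "(\<lambda>y. y + ee) ` T3 \<subseteq> T2" unfolding T2_def T3_def using V_add ee_prop(1) by auto
  qed
  have cT2: "card T2 = card T3" unfolding T2e by (simp add: card_image)
  have u1: "T = T1 \<union> T2" "T1 \<inter> T2 = {}" unfolding T_def T1_def T2_def by auto
  have u2: "T = T3 \<union> T4" "T3 \<inter> T4 = {}" unfolding T_def T3_def T4_def by auto
  have "card T = card T1 + card T2" using u1 fT card_Un_disjoint[of T1 T2] by (metis finite_Un)
  moreover have "card T = card T3 + card T4" using u2 fT card_Un_disjoint[of T3 T4] by (metis finite_Un)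
  ultimately show ?thesis using cT2 by simp
qed

definition kx where "kx x = kk R x"

lemma kk_eq: assumes x: "x \<in> max_ideal R" "x \<noteq> 0" "v x = int ee"
  shows "kx x = card T4"
proof -
  have xR: "x \<in> R" using x maxid by blast
  define Cx where "Cx = {a + x * r | a r. a \<in> conductor R \<and> r \<in> R}"
  have Cx_eq: "Cx = pls (Ge (int cc)) (scl x R)"
    unfolding Cx_def pls_def scl_def conductor_eq by blast
  have sX: "Rsubmod R (scl x R)" by (rule scl_sub[OF sR])
  have XR: "scl x R \<subseteq> R" unfolding scl_def using Rmult[OF xR] by blast
  have frC: "fr Cx R (int cc) 0"
    unfolding Cx_eq by (rule fr_intro[OF sm_pls[OF Ge_sub sX] sR pls_le[OF sR Gecc XR] pls_sub1[OF sX] R_Ge0])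
  have "kx x = card (VS R - VS Cx)" unfolding kx_def kk_def Cx_def[symmetric] using len_eq[OF frC] .
  also have "VS R - VS Cx = int ` T1"
  proof
    show "VS R - VS Cx \<subseteq> int ` T1"
    proof
      fix u assume u: "u \<in> VS R - VS Cx"
      have u0: "u \<ge> 0" using u VS_R_nonneg by blast
      have nV: "nat u \<in> V" using u VS_R_sub_V by blast
      have "\<not> u \<ge> int cc"
      proof
        assume "u \<ge> int cc"
        hence "u \<in> VS (Ge (int cc))" using VS_Ge by blast
        moreover have "Ge (int cc) \<subseteq> Cx" unfolding Cx_eq by (rule pls_sub1[OF sX])
        ultimately show False using u VS_mono by blast
      qed
      hence lt: "nat u < cc" using u0 by linarith
      have "\<not> (ee \<le> nat u \<and> nat u - ee \<in> V)"
      proof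
        assume a: "ee \<le> nat u \<and> nat u - ee \<in> V"
        hence "int (nat u - ee) \<in> VS R" using V_iff by blast
        then obtain z where z: "z \<in> R" "z \<noteq> 0" "v z = int (nat u - ee)" unfolding VS_mem by blast
        have "x * z \<in> scl x R" unfolding scl_def using z by blast
        hence "x * z \<in> Cx" unfolding Cx_eq using pls_sub2[OF Ge_sub] by blast
        moreover have "x * z \<noteq> 0" "v (x * z) = u" using z x v_mult a u0 by auto
        ultimately have "u \<in> VS Cx" unfolding VS_mem by blast
        thus False using u by blast
      qed
      hence "nat u \<in> T1" unfolding T1_def using nV lt by simp
      thus "u \<in> int ` T1" using u0 by (metis image_eqI int_nat_eq)
    qed
    show "int ` T1 \<subseteq> VS R - VS Cx"
    proof
      fix u assume "u \<in> int ` T1"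
      then obtain y where y: "y \<in> T1" "u = int y" by blast
      have uR: "u \<in> VS R" using y V_iff unfolding T1_def by simp
      have "u \<notin> VS Cx"
      proof
        assume "u \<in> VS Cx"
        then obtain z where z: "z \<in> Cx" "z \<noteq> 0" "v z = u" unfolding VS_mem by blast
        hence "z \<in> pls (Ge (int cc)) (scl x R)" unfolding Cx_eq by simp
        then obtain a w where aw: "a \<in> Ge (int cc)" "w \<in> scl x R" "z = a + w" by (rule pls_E)
        then obtain q where q: "q \<in> R" "w = x * q" unfolding scl_def by blast
        have bad: False if "w \<noteq> 0" "v w = u"
        proof -
          have qn: "q \<noteq> 0" using that q by auto
          have "v q = u - int ee" using that q v_mult[OF x(2) qn] x by simp
          hence "u - int ee \<in> VS R" using q qn unfolding VS_mem by blast
          moreover have "u - int ee \<ge> 0" using calculation VS_R_nonneg by blast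
          ultimately have "ee \<le> y \<and> y - ee \<in> V" using V_iff y by (simp add: of_nat_diff)
          thus False using y unfolding T1_def by blast
        qed
        have ylt: "y < cc" using y unfolding T1_def by simp
        show False
        proof (cases "w = 0")
          case True
          hence "v a = u" "a \<noteq> 0" using aw z by auto
          thus False using aw ylt y unfolding Ge_def by auto
        next
          case wn: False
          show False
          proof (cases "a = 0")
            case True thus False using bad wn aw z by simp
          next
            case an: False
            have va: "v a \<ge> int cc" using aw an unfolding Ge_def by simp
            show False
            proof (cases "v w < v a")
              case True
              hence "v z = v w" using v_strict[OF wn an True] aw by (simp add: add.commute)
              thus False using bad wn z by simp
            next
              case False
              have "v (a + w) \<ge> min (v a) (v w)" using v_add[OF an wn] aw z by simp
              hence "v z \<ge> int cc" using False va aw by simp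
              thus False using z y ylt by simp
            qed
          qed
        qed
      qed
      thus "u \<in> VS R - VS Cx" using uR by blast
    qed
  qed
  finally show ?thesis using card_T1 by (simp add: card_image)
qed

lemma Ge_Q: assumes "int (sq j) + h \<ge> int cc" shows "Ge h \<subseteq> Q j"
proof
  fix z assume z: "z \<in> Ge h"
  show "z \<in> Q j" unfolding Q_def colon_def
  proof (intro CollectI ballI)
    fix a assume "a \<in> Rf j"
    hence "a \<in> Ge (int (sq j))" unfolding Rf_eq by blast
    hence "z * a \<in> Ge (h + int (sq j))" using Ge_mult z by blast
    thus "z * a \<in> R" using Ge_mono[of "int cc" "h + int (sq j)"] assms Gecc by auto
  qed
qed

lemma sumB: assumes i0: "1 \<le> i0" "i0 \<le> NN" and h: "int (sq (i0 - 1)) + hh \<ge> int cc" and hh: "hh \<ge> 1"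
  shows "(\<Sum>i\<in>{i0..NN}. rI i) \<le> nat (hh - 1)"
proof -
  have "(\<Sum>i\<in>{Suc (i0 - 1)..NN}. rI i) = card (VS (Q NN) - VS (Q (i0 - 1)))"
    by (rule telescope) (use i0 in auto)
  hence eq: "(\<Sum>i\<in>{i0..NN}. rI i) = card (VS (Ge 0) - VS (Q (i0 - 1)))" using i0 QNN by simp
  have "VS (Ge 0) - VS (Q (i0 - 1)) \<subseteq> {1..<hh}"
  proof
    fix u assume u: "u \<in> VS (Ge 0) - VS (Q (i0 - 1))"
    hence "u \<ge> 0" using VS_Ge by blast
    moreover have "u \<noteq> 0"
    proof
      assume "u = 0"
      moreover have "1 \<in> Q (i0 - 1)" using R_Q R1 by blast
      ultimately have "u \<in> VS (Q (i0 - 1))" using v_one unfolding VS_mem by force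
      thus False using u by blast
    qed
    moreover have "\<not> u \<ge> hh"
    proof
      assume "u \<ge> hh" hence "u \<in> VS (Ge hh)" using VS_Ge by blast
      hence "u \<in> VS (Q (i0 - 1))" using VS_mono[OF Ge_Q[OF h]] by blast
      thus False using u by blast
    qed
    ultimately show "u \<in> {1..<hh}" by simp
  qed
  hence "card (VS (Ge 0) - VS (Q (i0 - 1))) \<le> card {1..<hh}" by (rule card_mono[rotated]) simp
  thus ?thesis using eq by simp
qed

definition G where "G = {g. cc - ee \<le> g \<and> g < cc \<and> g \<notin> V}"
lemma G_le_r: "card G \<le> rty"
proof -
  have "int ` G \<subseteq> VS Qm - VS R"
  proof
    fix u assume "u \<in> int ` G"
    then obtain g where g: "g \<in> G" "u = int g" by blast
    have "tp u \<in> Qm" unfolding Qm_def colon_def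
    proof (intro CollectI ballI)
      fix m assume m: "m \<in> max_ideal R"
      show "tp u * m \<in> R"
      proof (cases "m = 0")
        case True thus ?thesis using R0 by simp
      next
        case mn: False
        have mR: "m \<in> R" and vm: "v m \<ge> 1" using m mn unfolding maxid Ge_def by auto
        have "nat (v m) \<in> V" using mR mn VS_R_sub_V unfolding VS_mem by blast
        hence "ee \<le> nat (v m)" using ee_prop(3) vm by simp
        hence "v m \<ge> int ee" using vm by linarith
        hence "u + v m \<ge> int cc" using g ee_le_cc unfolding G_def by auto
        moreover have "tp u * m \<in> Ge (u + v m)" using Ge_mult[of "tp u" u m "v m"] tp unfolding Ge_def by simp
        ultimately show ?thesis using Ge_mono Gecc by blast
      qed
    qed
    hence "u \<in> VS Qm" using tp unfolding VS_mem by blast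
    moreover have "u \<notin> VS R" using g V_iff unfolding G_def by simp
    ultimately show "u \<in> VS Qm - VS R" by blast
  qed
  hence "card (int ` G) \<le> card (VS Qm - VS R)" using VS_fin(2)[OF Gecc Qm_low] by (rule card_mono[rotated])
  thus ?thesis using r_eq by (simp add: card_image)
qed

lemma e_le: "ee \<le> card T4 + rty" and r_pos: "rty \<ge> 1"
proof -
  have "{cc - ee..<cc} = G \<union> T4" "G \<inter> T4 = {}" unfolding G_def T4_def by auto
  moreover have "finite G" "finite T4" unfolding G_def T4_def by (auto intro: finite_subset[of _ "{..<cc}"])
  ultimately have "card {cc - ee..<cc} = card G + card T4" by (metis card_Un_disjoint)
  hence "ee = card G + card T4" using ee_le_cc by simp
  thus "ee \<le> card T4 + rty" using G_le_r by simp
  have "cc - 1 \<in> G" using cc1_gap ee_prop(2) cc_pos unfolding G_def by auto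
  hence "card G \<ge> 1" using \<open>finite G\<close> by (metis One_nat_def Suc_leI card_gt_0_iff empty_iff)
  thus "rty \<ge> 1" using G_le_r by simp
qed

end



lemma arith_main:
  fixes b r e k :: int and rr :: "nat \<Rightarrow> int" and A B N :: "nat set" and P :: bool
  assumes fN: "finite N" and AB: "A \<union> B = N" "A \<inter> B = {}"
    and bdef: "b = (\<Sum>i\<in>N. r - rr i)"
    and rb: "\<And>i. i \<in> N \<Longrightarrow> 1 \<le> rr i \<and> rr i \<le> r"
    and kB: "k = int (card B)"
    and sB: "(\<Sum>i\<in>B. rr i) \<le> e - 1"
    and ek: "e \<le> k + r" and r1: "r \<ge> 1"
    and PP: "(\<Sum>i\<in>B. rr i) = e - 1 \<Longrightarrow> P"
  shows
    "((e - r - 1) * (r - 1) \<le> r * k - e + 1 \<and>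
      r * k - e + 1 \<le> b - (\<Sum>i\<in>A. r - rr i) \<and>
      b - (\<Sum>i\<in>A. r - rr i) \<le> k * (r - 1))
   \<and> (b = (k - 1) * (r - 1) + (\<Sum>i\<in>A. r - rr i) \<longleftrightarrow>
        (\<Sum>i\<in>B. rr i) = e - 1 \<and> k = e - r)
   \<and> (b = k * (r - 1) + (\<Sum>i\<in>A. r - rr i) \<longleftrightarrow> (\<forall>i\<in>B. rr i = 1))
   \<and> ((b = (e - r - 1) * (r - 1) \<longleftrightarrow> b = (k - 1) * (r - 1))
      \<and> (b = (k - 1) * (r - 1) \<longleftrightarrow>
           e - r = k \<and> (\<Sum>i\<in>B. rr i) = e - 1 \<and> (\<forall>i\<in>A. rr i = r))
      \<and> (b = (e - r - 1) * (r - 1) \<longrightarrow> P))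
   \<and> b \<ge> (r - 1) * int (card {i\<in>N. rr i = 1})"
proof -
  have fA: "finite A" and fB: "finite B" using fN AB by auto
  have bsplit: "b = (\<Sum>i\<in>A. r - rr i) + (\<Sum>i\<in>B. r - rr i)"
    unfolding bdef using sum.union_disjoint[OF fA fB AB(2)] AB(1) by simp
  have SB: "(\<Sum>i\<in>B. r - rr i) = k * r - (\<Sum>i\<in>B. rr i)"
    using kB by (simp add: sum_subtractf)
  have rbA: "\<And>i. i \<in> A \<Longrightarrow> 1 \<le> rr i \<and> rr i \<le> r" using rb AB by blast
  have rbB: "\<And>i. i \<in> B \<Longrightarrow> 1 \<le> rr i \<and> rr i \<le> r" using rb AB by blast
  have SA0: "(\<Sum>i\<in>A. r - rr i) \<ge> 0" using rbA by (intro sum_nonneg) auto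
  have SAeq: "(\<Sum>i\<in>A. r - rr i) = 0 \<longleftrightarrow> (\<forall>i\<in>A. rr i = r)"
    using sum_nonneg_eq_0_iff[OF fA, of "\<lambda>i. r - rr i"] rbA by auto
  have kle: "k \<le> (\<Sum>i\<in>B. rr i)"
  proof -
    have "(\<Sum>i\<in>B. (1::int)) \<le> (\<Sum>i\<in>B. rr i)" using rbB by (intro sum_mono) auto
    thus ?thesis using kB by simp
  qed
  have SBk: "(\<Sum>i\<in>B. rr i) = k \<longleftrightarrow> (\<forall>i\<in>B. rr i = 1)"
  proof -
    have "(\<Sum>i\<in>B. rr i - 1) = (\<Sum>i\<in>B. rr i) - k" using kB by (simp add: sum_subtractf)
    moreover have "(\<Sum>i\<in>B. rr i - 1) = 0 \<longleftrightarrow> (\<forall>i\<in>B. rr i - 1 = 0)"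
    proof (rule sum_nonneg_eq_0_iff[OF fB])
      fix i assume "i \<in> B" thus "0 \<le> rr i - 1" using rbB by force
    qed
    ultimately show ?thesis by auto
  qed
  have id1: "r * k - e + 1 - (e - r - 1) * (r - 1) = r * (k - e + r)" by (simp add: algebra_simps)
  have nn: "r * (k - e + r) \<ge> 0" using r1 ek by simp
  have p1: "(e - r - 1) * (r - 1) \<le> r * k - e + 1" using id1 nn by linarith
  have p2: "r * k - e + 1 \<le> b - (\<Sum>i\<in>A. r - rr i)" using bsplit SB sB by (simp add: algebra_simps)
  have p3: "b - (\<Sum>i\<in>A. r - rr i) \<le> k * (r - 1)" using bsplit SB kle by (simp add: algebra_simps)
  have q2: "b = (k - 1) * (r - 1) + (\<Sum>i\<in>A. r - rr i) \<longleftrightarrow>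
        (\<Sum>i\<in>B. rr i) = e - 1 \<and> k = e - r"
  proof
    assume "b = (k - 1) * (r - 1) + (\<Sum>i\<in>A. r - rr i)"
    hence "(\<Sum>i\<in>B. rr i) = k + r - 1" using bsplit SB by (simp add: algebra_simps)
    thus "(\<Sum>i\<in>B. rr i) = e - 1 \<and> k = e - r" using sB ek by linarith
  next
    assume "(\<Sum>i\<in>B. rr i) = e - 1 \<and> k = e - r"
    thus "b = (k - 1) * (r - 1) + (\<Sum>i\<in>A. r - rr i)" using bsplit SB by (simp add: algebra_simps)
  qed
  have q3: "b = k * (r - 1) + (\<Sum>i\<in>A. r - rr i) \<longleftrightarrow> (\<forall>i\<in>B. rr i = 1)"
  proof -
    have "b = k * (r - 1) + (\<Sum>i\<in>A. r - rr i) \<longleftrightarrow> (\<Sum>i\<in>B. rr i) = k"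
      using bsplit SB by (auto simp: algebra_simps)
    thus ?thesis using SBk by simp
  qed
  have lowb: "b \<ge> r * k - e + 1" using p2 SA0 by linarith
  have ab: "b = (e - r - 1) * (r - 1) \<longleftrightarrow> b = (k - 1) * (r - 1)"
  proof
    assume a: "b = (e - r - 1) * (r - 1)"
    hence "r * (k - e + r) \<le> 0" using lowb id1 by linarith
    hence "k - e + r \<le> 0" using r1 by (simp add: mult_le_0_iff)
    hence "k = e - r" using ek by simp
    hence "e - r - 1 = k - 1" by simp
    thus "b = (k - 1) * (r - 1)" using a by simp
  next
    assume a: "b = (k - 1) * (r - 1)"
    have "(k - 1) * (r - 1) - (r * k - e + 1) = e - k - r" by (simp add: algebra_simps)
    hence "e - k - r \<ge> 0" using a lowb by linarith
    hence "k = e - r" using ek by simp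
    thus "b = (e - r - 1) * (r - 1)" using a by simp
  qed
  have bc: "b = (k - 1) * (r - 1) \<longleftrightarrow> e - r = k \<and> (\<Sum>i\<in>B. rr i) = e - 1 \<and> (\<forall>i\<in>A. rr i = r)"
  proof
    assume a: "b = (k - 1) * (r - 1)"
    have "(k - 1) * (r - 1) - (r * k - e + 1) = e - k - r" by (simp add: algebra_simps)
    hence ke: "k = e - r" using a lowb ek by linarith
    hence "b = r * k - e + 1" using a by (simp add: algebra_simps)
    hence "(\<Sum>i\<in>A. r - rr i) = 0 \<and> (\<Sum>i\<in>B. rr i) = e - 1"
      using bsplit SB sB SA0 by (simp add: algebra_simps)
    thus "e - r = k \<and> (\<Sum>i\<in>B. rr i) = e - 1 \<and> (\<forall>i\<in>A. rr i = r)" using SAeq ke by simp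
  next
    assume a: "e - r = k \<and> (\<Sum>i\<in>B. rr i) = e - 1 \<and> (\<forall>i\<in>A. rr i = r)"
    hence "(\<Sum>i\<in>A. r - rr i) = 0" using SAeq by simp
    thus "b = (k - 1) * (r - 1)" using a bsplit SB by (simp add: algebra_simps)
  qed
  have cP: "b = (e - r - 1) * (r - 1) \<longrightarrow> P" using ab bc PP by blast
  have p5: "b \<ge> (r - 1) * int (card {i\<in>N. rr i = 1})"
  proof -
    let ?S = "{i\<in>N. rr i = 1}"
    have "(\<Sum>i\<in>?S. r - rr i) \<le> (\<Sum>i\<in>N. r - rr i)"
      using rb fN by (intro sum_mono2) auto
    moreover have "(\<Sum>i\<in>?S. r - rr i) = (\<Sum>i\<in>?S. r - 1)" by (intro sum.cong) auto
    ultimately show ?thesis using bdef by (simp add: mult.commute)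
  qed
  show ?thesis using p1 p2 p3 q2 q3 ab bc cP p5 by blast
qed




theorem proposition2p1:
  fixes R :: "'a::field set" and v :: "'a \<Rightarrow> int" and x :: 'a and i0 :: nat
  assumes S: "setting R v"
    and i0: "i0 \<in> {1..nn R v}"
    and i0min: "sv R v (i0 - 1) =
                  (LEAST y. y \<in> vR R v \<and> int y \<ge> int (cond R v) - int (mult_e R v))"
    and x: "x \<in> max_ideal R" "x \<noteq> 0" "v x = int (mult_e R v)"
  defines "b \<equiv> bb R v" and "r \<equiv> int (ctype R)" and "e \<equiv> int (mult_e R v)"
    and "k \<equiv> int (kk R x)" and "n \<equiv> nn R v"
    and "B \<equiv> {i0..nn R v}" and "A \<equiv> {1..nn R v} - {i0..nn R v}"
    and "rr \<equiv> (\<lambda>i. int (ri R v i))"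
  shows
    "((e - r - 1) * (r - 1) \<le> r * k - e + 1 \<and>
      r * k - e + 1 \<le> b - (\<Sum>i\<in>A. r - rr i) \<and>
      b - (\<Sum>i\<in>A. r - rr i) \<le> k * (r - 1))
   \<and> (b = (k - 1) * (r - 1) + (\<Sum>i\<in>A. r - rr i) \<longleftrightarrow>
        (\<Sum>i\<in>B. rr i) = e - 1 \<and> k = e - r)
   \<and> (b = k * (r - 1) + (\<Sum>i\<in>A. r - rr i) \<longleftrightarrow> (\<forall>i\<in>B. rr i = 1))
   \<and> ((b = (e - r - 1) * (r - 1) \<longleftrightarrow> b = (k - 1) * (r - 1))
      \<and> (b = (k - 1) * (r - 1) \<longleftrightarrow>
           e - r = k \<and> (\<Sum>i\<in>B. rr i) = e - 1 \<and> (\<forall>i\<in>A. rr i = r))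
      \<and> (b = (e - r - 1) * (r - 1) \<longrightarrow>
           int (sv R v (i0 - 1)) = int (cond R v) - e))
   \<and> b \<ge> (r - 1) * int (card {i\<in>{1..n}. rr i = 1})"
proof -
  interpret I: stp R v by (rule stp.intro[OF S])
  have nN: "n = I.NN" unfolding n_def I.NN_def ..
  have cc: "cond R v = I.cc" unfolding I.cc_def ..
  have ee: "mult_e R v = I.ee" unfolding I.ee_def ..
  have sv: "sv R v = I.sq" unfolding I.sq_def ..
  have VV: "vR R v = I.V" unfolding I.V_def ..
  have rrI: "\<And>i. rr i = int (I.rI i)" unfolding rr_def I.rI_def by simp
  have rI: "r = int I.rty" unfolding r_def I.rty_def ..
  have eI: "e = int I.ee" unfolding e_def I.ee_def ..
  have i0': "1 \<le> i0" "i0 \<le> I.NN" using i0 unfolding I.NN_def by auto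
  have h: "I.sq (i0 - 1) = (LEAST y. y \<in> I.V \<and> int y \<ge> int I.cc - int I.ee)"
    using i0min unfolding sv VV cc ee .
  have BB: "B = {i0..I.NN}" unfolding B_def I.NN_def ..
  have AA: "A = {1..I.NN} - {i0..I.NN}" unfolding A_def I.NN_def ..
  have fN: "finite {1..n}" by simp
  have AB: "A \<union> B = {1..n}" "A \<inter> B = {}" unfolding AA BB nN using i0' by auto
  have bdef: "b = (\<Sum>i\<in>{1..n}. r - rr i)"
  proof -
    have "(\<Sum>i\<in>{1..n}. rr i) = int I.dd" unfolding rrI nN using I.sum_rr by (simp flip: of_nat_sum)
    hence "(\<Sum>i\<in>{1..n}. r - rr i) = int n * r - int I.dd" by (simp add: sum_subtractf)
    moreover have "b = (int I.cc - int I.dd) * r - int I.dd"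
      unfolding b_def bb_def r_def cc I.dd_def ..
    moreover have "int n = int I.cc - int I.dd" unfolding nN I.NN_def nn_def cc I.dd_def[symmetric]
      using I.dd_le by simp
    ultimately show ?thesis by simp
  qed
  have rb: "\<And>i. i \<in> {1..n} \<Longrightarrow> 1 \<le> rr i \<and> rr i \<le> r"
  proof -
    fix i assume "i \<in> {1..n}"
    hence i: "1 \<le> i" "i \<le> I.NN" using nN by auto
    show "1 \<le> rr i \<and> rr i \<le> r" using I.rr_ge1[OF i] I.rr_le_r[OF i] unfolding rrI rI by simp
  qed
  have kB: "k = int (card B)"
  proof -
    have "kk R x = I.kx x" unfolding I.kx_def ..
    also have "\<dots> = card I.T4" using I.kk_eq[OF x(1,2)] x(3) unfolding ee by simp
    also have "\<dots> = card {i0..I.NN}" using I.T4_eq(2)[OF i0' h] .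
    finally show ?thesis unfolding k_def BB by simp
  qed
  have low: "I.cc - I.ee \<le> I.sq (i0 - 1)" using I.Least_i0(1)[OF h] .
  have sB: "(\<Sum>i\<in>B. rr i) \<le> e - 1"
  proof -
    have "(\<Sum>i\<in>{i0..I.NN}. I.rI i) \<le> nat (int I.ee - 1)"
      by (rule I.sumB[OF i0']) (use low I.ee_le_cc I.ee2 in linarith)+
    thus ?thesis unfolding BB rrI eI using I.ee2 by (simp flip: of_nat_sum)
  qed
  have ek: "e \<le> k + r" using I.e_le unfolding eI rI kB BB using I.T4_eq(2)[OF i0' h] by simp
  have r1: "r \<ge> 1" using I.r_pos unfolding rI by simp
  have PP: "int (sv R v (i0 - 1)) = int (cond R v) - e" if eq: "(\<Sum>i\<in>B. rr i) = e - 1"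
  proof (rule ccontr)
    assume ne: "int (sv R v (i0 - 1)) \<noteq> int (cond R v) - e"
    hence "I.cc - I.ee + 1 \<le> I.sq (i0 - 1)" using low I.ee_le_cc unfolding sv cc eI by linarith
    hence "(\<Sum>i\<in>{i0..I.NN}. I.rI i) \<le> nat (int I.ee - 1 - 1)"
      by (intro I.sumB[OF i0']) (use I.ee_le_cc I.ee2 in linarith)+
    hence "(\<Sum>i\<in>B. rr i) \<le> e - 2" unfolding BB rrI eI using I.ee2 by (simp flip: of_nat_sum)
    thus False using eq by simp
  qed
  show ?thesis
    apply (rule arith_main[OF fN AB bdef rb kB sB ek r1])
     apply simp
    apply (erule PP)
    done
qed



end
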